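(* Let $E$ be a separable Banach space over $K$ and let $X=(X_1,\dots,X_n)$ be a vector of independent, identically distributed, $E$-valued $K$-Gaussian random variables. Let $\{\alpha_1,\dots,\alpha_m\}$ be an orthogonal set in $K^n$, where $\alpha_j=(\alpha_{j,1},\dots,\alpha_{j,n})$, and let $A$ be the $n\times m$ matrix whose $j$-th column is $\alpha_j$. Then $Y=XA$, i.e. $Y_j=\sum_{i=1}^n\alpha_{j,i}X_i$ for $1\le j\le m$, is a vector of independent $K$-Gaussian random variables.
   Context: $K$ is a local field (locally compact, non-discrete, totally disconnected topological field) with its non-archimedean absolute value $|\cdot|$ ($|x|=0\iff x=0$, $|xy|=|x||y|$, $|x+y|\le|x|\vee|y|$). A normed space over $K$ is a $K$-vector space with $\|\cdot\|$ satisfying $\|x\|=0\iff x=0$, $\|\alpha x\|=|\alpha|\|x\|$, $\|x+y\|\le\|x\|\vee\|y\|$; a Banach space if complete. $K^n$ has norm $|(x_1,\dots,x_n)|=|x_1|\vee\dots\vee|x_n|$. A subset $F$ of a normed space is orthogonal if $\|\sum_{i=1}^k\beta_ix_i\|=\bigvee_{i=1}^k|\beta_i|\|x_i\|$ for all finite $\{x_1,\dots,x_k\}\subset F$ and $\beta_i\in K$; orthonormal if moreover each element has norm $1$. For a separable Banach space $E$ over $K$, an $E$-valued random variable $X$ is $K$-Gaussian if whenever $X_1,X_2$ are independent copies of $X$ and $(\alpha_{11},\alpha_{12}),(\alpha_{21},\alpha_{22})$ is an orthonormal pair in $K^2$, $(\alpha_{11}X_1+\alpha_{12}X_2,\alpha_{21}X_1+\alpha_{22}X_2)$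 has the same law as $(X_1,X_2)$. *)

theory Defs
  imports "HOL-Probability.Probability"
begin

definition nonarch_abs :: "('k::field \<Rightarrow> real) \<Rightarrow> bool" where
  "nonarch_abs absv \<longleftrightarrow>
     (\<forall>x. absv x \<ge> 0) \<and> (\<forall>x. absv x = 0 \<longleftrightarrow> x = 0) \<and>
     (\<forall>x y. absv (x * y) = absv x * absv y) \<and>
     (\<forall>x y. absv (x + y) \<le> max (absv x) (absv y))"

definition seq_compact_abs :: "('k::field \<Rightarrow> real) \<Rightarrow> 'k set \<Rightarrow> bool" where
  "seq_compact_abs absv S \<longleftrightarrow>
     (\<forall>f::nat \<Rightarrow> 'k. (\<forall>k. f k \<in> S) \<longrightarrow>
        (\<exists>r l. strict_mono r \<and> l \<in> S \<and> (\<lambda>k. absv (f (r k) - l)) \<longlonglongrightarrow> 0))"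

text \<open>K is a local field: the topology is the one of the non-archimedean absolute value,
  it is non-discrete and locally compact (totally disconnected is automatic).\<close>
definition local_field :: "('k::field \<Rightarrow> real) \<Rightarrow> bool" where
  "local_field absv \<longleftrightarrow> nonarch_abs absv \<and>
     (\<forall>x. \<forall>e>0. \<exists>y. y \<noteq> x \<and> absv (y - x) < e) \<and>
     (\<forall>x. \<exists>r>0. seq_compact_abs absv {y. absv (y - x) \<le> r})"

definition normed_space_K ::
  "('k::field \<Rightarrow> real) \<Rightarrow> ('k \<Rightarrow> 'e::ab_group_add \<Rightarrow> 'e) \<Rightarrow> ('e \<Rightarrow> real) \<Rightarrow> bool" where
  "normed_space_K absv smul nrm \<longleftrightarrow> module smul \<and>
     (\<forall>x. nrm x = 0 \<longleftrightarrow> x = 0) \<and>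
     (\<forall>a x. nrm (smul a x) = absv a * nrm x) \<and>
     (\<forall>x y. nrm (x + y) \<le> max (nrm x) (nrm y))"

definition separable_banach_K ::
  "('k::field \<Rightarrow> real) \<Rightarrow> ('k \<Rightarrow> 'e::ab_group_add \<Rightarrow> 'e) \<Rightarrow> ('e \<Rightarrow> real) \<Rightarrow> bool" where
  "separable_banach_K absv smul nrm \<longleftrightarrow> normed_space_K absv smul nrm \<and>
     (\<forall>f::nat \<Rightarrow> 'e. (\<forall>e>0. \<exists>N. \<forall>p\<ge>N. \<forall>q\<ge>N. nrm (f p - f q) < e) \<longrightarrow>
        (\<exists>l. (\<lambda>k. nrm (f k - l)) \<longlonglongrightarrow> 0)) \<and>
     (\<exists>D. countable D \<and> (\<forall>x. \<forall>e>0. \<exists>d\<in>D. nrm (x - d) < e))"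

definition borelE :: "('e::ab_group_add \<Rightarrow> real) \<Rightarrow> 'e measure" where
  "borelE nrm = sigma UNIV {U. \<forall>x\<in>U. \<exists>e>0. {y. nrm (y - x) < e} \<subseteq> U}"

definition kn_norm :: "('k::field \<Rightarrow> real) \<Rightarrow> nat \<Rightarrow> (nat \<Rightarrow> 'k) \<Rightarrow> real" where
  "kn_norm absv n x = Max (insert 0 ((\<lambda>i. absv (x i)) ` {..<n}))"

text \<open>The family v 0, ..., v (m-1) of vectors of K^n (v j i is the i-th coordinate of v j)
  is orthogonal.\<close>
definition orthogonal_family ::
  "('k::field \<Rightarrow> real) \<Rightarrow> nat \<Rightarrow> (nat \<Rightarrow> nat \<Rightarrow> 'k) \<Rightarrow> nat \<Rightarrow> bool" where
  "orthogonal_family absv n v m \<longleftrightarrow>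
     (\<forall>\<beta>::nat \<Rightarrow> 'k. kn_norm absv n (\<lambda>i. \<Sum>j<m. \<beta> j * v j i) =
        Max (insert 0 ((\<lambda>j. absv (\<beta> j) * kn_norm absv n (v j)) ` {..<m})))"

definition orthonormal_pair :: "('k::field \<Rightarrow> real) \<Rightarrow> 'k \<Rightarrow> 'k \<Rightarrow> 'k \<Rightarrow> 'k \<Rightarrow> bool" where
  "orthonormal_pair absv a11 a12 a21 a22 \<longleftrightarrow>
     (let v = (\<lambda>j i. if j = 0 then (if i = 0 then a11 else a12) else (if i = 0 then a21 else a22))
      in orthogonal_family absv 2 v 2 \<and> kn_norm absv 2 (v 0) = 1 \<and> kn_norm absv 2 (v 1) = 1)"

text \<open>X is K-Gaussian iff for independent copies X1, X2 (i.e. (X1,X2) has law mu x mu,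
  mu the law of X) and every orthonormal pair, the transformed pair has law mu x mu.\<close>
definition K_gaussian ::
  "('k::field \<Rightarrow> real) \<Rightarrow> ('k \<Rightarrow> 'e::ab_group_add \<Rightarrow> 'e) \<Rightarrow> ('e \<Rightarrow> real) \<Rightarrow> 'a measure \<Rightarrow> ('a \<Rightarrow> 'e) \<Rightarrow> bool" where
  "K_gaussian absv smul nrm M X \<longleftrightarrow> X \<in> measurable M (borelE nrm) \<and>
     (let \<mu> = distr M (borelE nrm) X in
      \<forall>a11 a12 a21 a22. orthonormal_pair absv a11 a12 a21 a22 \<longrightarrow>
        distr (\<mu> \<Otimes>\<^sub>M \<mu>) (borelE nrm \<Otimes>\<^sub>M borelE nrm)
          (\<lambda>(x, y). (smul a11 x + smul a12 y, smul a21 x + smul a22 y)) = \<mu> \<Otimes>\<^sub>M \<mu>)"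

end

theory Submission
  imports Defs
begin



definition mx :: "'a set \<Rightarrow> ('a \<Rightarrow> real) \<Rightarrow> real" where
  "mx S f = Max (insert 0 (f ` S))"

lemma mx_le_iff: "finite S \<Longrightarrow> mx S f \<le> r \<longleftrightarrow> 0 \<le> r \<and> (\<forall>s\<in>S. f s \<le> r)"
  unfolding mx_def by auto

lemma mx_nonneg: "finite S \<Longrightarrow> 0 \<le> mx S f"
  unfolding mx_def by auto

lemma mx_ge: "finite S \<Longrightarrow> s \<in> S \<Longrightarrow> f s \<le> mx S f"
  unfolding mx_def by auto

lemma mx_eqI:
  assumes "finite A" "finite B" "\<And>r. 0 \<le> r \<Longrightarrow> (\<forall>a\<in>A. f a \<le> r) \<longleftrightarrow> (\<forall>b\<in>B. g b \<le> r)"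
  shows "mx A f = mx B g"
proof (rule antisym)
  show "mx A f \<le> mx B g" using assms mx_le_iff[of A f "mx B g"] mx_le_iff[of B g "mx B g"] mx_nonneg[of B g] by auto
  show "mx B g \<le> mx A f" using assms mx_le_iff[of B g "mx A f"] mx_le_iff[of A f "mx A f"] mx_nonneg[of A f] by auto
qed

lemma mx_attained: "finite S \<Longrightarrow> 0 < mx S f \<Longrightarrow> \<exists>s\<in>S. f s = mx S f"
proof -
  assume S: "finite S" and p: "0 < mx S f"
  have "mx S f \<in> insert 0 (f ` S)" unfolding mx_def using S by (intro Max_in) auto
  then show ?thesis using p by auto
qed

lemma kn_norm_mx: "kn_norm absv n x = mx {..<n} (\<lambda>i. absv (x i))"
  unfolding kn_norm_def mx_def by simp

lemma orthogonal_family_mx: "orthogonal_family absv n v m \<longleftrightarrow>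
  (\<forall>\<beta>. mx {..<n} (\<lambda>i. absv (\<Sum>j<m. \<beta> j * v j i)) = mx {..<m} (\<lambda>j. absv (\<beta> j) * mx {..<n} (\<lambda>i. absv (v j i))))"
  unfolding orthogonal_family_def kn_norm_mx by (simp add: mx_def)

locale nabs =
  fixes absv :: "'k::field \<Rightarrow> real"
  assumes na: "nonarch_abs absv"
begin

lemma a_nonneg[simp]: "0 \<le> absv x" using na unfolding nonarch_abs_def by auto
lemma a_zero[simp]: "absv x = 0 \<longleftrightarrow> x = 0" using na unfolding nonarch_abs_def by auto
lemma a_0[simp]: "absv 0 = 0" using a_zero by blast
lemma a_mult[simp]: "absv (x * y) = absv x * absv y" using na unfolding nonarch_abs_def by auto
lemma a_add: "absv (x + y) \<le> max (absv x) (absv y)" using na unfolding nonarch_abs_def by auto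
lemma a_one[simp]: "absv 1 = 1"
proof -
  have "absv 1 = absv 1 * absv 1" using a_mult[of 1 1] by simp
  moreover have "absv 1 \<noteq> 0" by simp
  ultimately show ?thesis by (metis mult_cancel_left1)
qed
lemma a_minus[simp]: "absv (- x) = absv x"
proof -
  have "absv (-1) * absv (-1) = 1" using a_mult[of "-1" "-1"] by simp
  then have "absv (-1) = 1" using a_nonneg[of "-1"]
    by (metis abs_of_nonneg abs_square_eq_1 power2_eq_square)
  then show ?thesis using a_mult[of "-1" x] by simp
qed
lemma a_diff: "absv (x - y) \<le> max (absv x) (absv y)"
  using a_add[of x "-y"] by simp
lemma a_divide[simp]: "absv (x / y) = absv x / absv y"
proof (cases "y = 0")
  case True then show ?thesis by simp
next
  case False
  have "absv x = absv (x / y) * absv y" using False a_mult[of "x/y" y] by simp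
  then show ?thesis using False by (simp add: field_simps)
qed

lemma a_sum_le: "finite S \<Longrightarrow> absv (\<Sum>i\<in>S. f i) \<le> mx S (\<lambda>i. absv (f i))"
proof (induction S rule: finite_induct)
  case empty then show ?case by (simp add: mx_def)
next
  case (insert a S)
  have "absv (\<Sum>i\<in>insert a S. f i) \<le> max (absv (f a)) (absv (\<Sum>i\<in>S. f i))"
    using insert a_add by simp
  also have "\<dots> \<le> mx (insert a S) (\<lambda>i. absv (f i))"
    using insert mx_le_iff[of S "\<lambda>i. absv (f i)" "mx (insert a S) (\<lambda>i. absv (f i))"]
      mx_ge[of "insert a S" a "\<lambda>i. absv (f i)"] mx_ge[of "insert a S" _ "\<lambda>i. absv (f i)"]
      mx_nonneg[of "insert a S"]
    by auto
  finally show ?case .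
qed

lemma ultra_pair: "absv c \<le> 1 \<Longrightarrow> max (absv (a + b * c)) (absv b) = max (absv a) (absv b)"
proof -
  assume c: "absv c \<le> 1"
  have bc: "absv (b * c) \<le> absv b" using c mult_left_le[of "absv c" "absv b"] by simp
  have 1: "absv (a + b * c) \<le> max (absv a) (absv b)" using a_add[of a "b*c"] bc by auto
  have "absv a \<le> max (absv (a + b*c)) (absv (b*c))" using a_diff[of "a + b*c" "b*c"] by simp
  then have 2: "absv a \<le> max (absv (a + b*c)) (absv b)" using bc by auto
  show ?thesis using 1 2 by linarith
qed

end




definition opens :: "('e::ab_group_add \<Rightarrow> real) \<Rightarrow> 'e set set" where
  "opens nrm = {U. \<forall>x\<in>U. \<exists>e>0. {y. nrm (y - x) < e} \<subseteq> U}"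

lemma borelE_opens: "borelE nrm = sigma UNIV (opens nrm)"
  unfolding borelE_def opens_def by simp

lemma space_borelE[simp]: "space (borelE nrm) = UNIV"
  unfolding borelE_opens by simp

lemma sets_borelE: "sets (borelE nrm) = sigma_sets UNIV (opens nrm)"
  unfolding borelE_opens by (simp add: sets_measure_of)

lemma opens_in_borelE: "U \<in> opens nrm \<Longrightarrow> U \<in> sets (borelE nrm)"
  unfolding sets_borelE by auto

lemma measurable_borelE:
  assumes "\<And>U. U \<in> opens nrm \<Longrightarrow> f -` U \<inter> space M \<in> sets M"
  shows "f \<in> M \<rightarrow>\<^sub>M borelE nrm"
  unfolding borelE_opens by (rule measurable_measure_of) (use assms in auto)

locale kspace = nabs absv
  for absv :: "'k::field \<Rightarrow> real" +
  fixes smul :: "'k \<Rightarrow> 'e::ab_group_add \<Rightarrow> 'e" and nrm :: "'e \<Rightarrow> real" and D :: "'e set"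
  assumes ns: "normed_space_K absv smul nrm"
    and Dc: "countable D"
    and Dd: "\<forall>x. \<forall>e>0. \<exists>d\<in>D. nrm (x - d) < e"
begin

sublocale module smul using ns unfolding normed_space_K_def by auto

lemma n_zero[simp]: "nrm x = 0 \<longleftrightarrow> x = 0" using ns unfolding normed_space_K_def by auto
lemma n_0[simp]: "nrm 0 = 0" by simp
lemma n_smul[simp]: "nrm (smul a x) = absv a * nrm x" using ns unfolding normed_space_K_def by auto
lemma n_add: "nrm (x + y) \<le> max (nrm x) (nrm y)" using ns unfolding normed_space_K_def by auto
lemma n_minus[simp]: "nrm (- x) = nrm x"
proof -
  have e: "smul (- 1) x = - x" by (simp only: scale_minus_left scale_one)
  have "nrm (smul (- 1) x) = absv (- 1) * nrm x" by (rule n_smul)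
  also have "absv (- 1) = 1" by (simp only: a_minus a_one)
  finally show ?thesis using e by simp
qed
lemma n_nonneg[simp]: "0 \<le> nrm x"
  using n_add[of x "-x"] by simp
lemma n_diff_tri: "nrm (a - b) \<le> max (nrm (a - c)) (nrm (c - b))"
  using n_add[of "a - c" "c - b"] by simp
lemma n_sym: "nrm (a - b) = nrm (b - a)"
  using n_minus[of "a - b"] by simp

abbreviation "B \<equiv> borelE nrm"

lemma ball_in_B: "{y. nrm (y - d) < r} \<in> sets B"
proof (rule opens_in_borelE, unfold opens_def, safe)
  fix x assume x: "nrm (x - d) < r"
  have "{y. nrm (y - x) < r} \<subseteq> {y. nrm (y - d) < r}"
  proof
    fix y assume "y \<in> {y. nrm (y - x) < r}"
    then show "y \<in> {y. nrm (y - d) < r}" using x n_diff_tri[of y d x] by auto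
  qed
  moreover have "0 < r" using x n_nonneg[of "x - d"] by linarith
  ultimately show "\<exists>e>0. {y. nrm (y - x) < e} \<subseteq> {y. nrm (y - d) < r}" by blast
qed

lemma measurable_smul_c: "(\<lambda>x. smul c x) \<in> B \<rightarrow>\<^sub>M B"
proof (rule measurable_borelE)
  fix U assume U: "U \<in> opens nrm"
  have "(\<lambda>x. smul c x) -` U \<in> opens nrm"
    unfolding opens_def
  proof safe
    fix x assume "smul c x \<in> U"
    then obtain e where e: "e > 0" "{y. nrm (y - smul c x) < e} \<subseteq> U" using U unfolding opens_def by blast
    define d where "d = e / (absv c + 1)"
    have cp: "absv c + 1 > 0" using a_nonneg[of c] by linarith
    have d: "d > 0" unfolding d_def by (rule divide_pos_pos[OF e(1) cp])
    have "smul c y \<in> U" if "nrm (y - x) < d" for y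
    proof -
      have "nrm (smul c y - smul c x) = absv c * nrm (y - x)"
        by (metis n_smul scale_right_diff_distrib)
      also have "\<dots> \<le> absv c * d" using that by (simp add: mult_left_mono)
      also have "\<dots> < e"
      proof -
        have "absv c * d < (absv c + 1) * d" using d by simp
        also have "\<dots> = e" unfolding d_def using cp by simp
        finally show ?thesis .
      qed
      finally show ?thesis using e by auto
    qed
    then show "\<exists>e>0. {y. nrm (y - x) < e} \<subseteq> (\<lambda>x. smul c x) -` U" using d by blast
  qed
  then show "(\<lambda>x. smul c x) -` U \<inter> space B \<in> sets B" by (simp add: opens_in_borelE)
qed

lemma measurable_plus: "(\<lambda>p. fst p + snd p) \<in> B \<Otimes>\<^sub>M B \<rightarrow>\<^sub>M B"
proof (rule measurable_borelE)
  fix U assume U: "U \<in> opens nrm"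
  define R where "R = (\<lambda>(d1, d2, k::nat). {y. nrm (y - d1) < 1 / Suc k} \<times> {y. nrm (y - d2) < 1 / Suc k})"
  define P where "P = (\<lambda>p. fst p + snd p) -` U"
  define Q where "Q = {q \<in> D \<times> D \<times> UNIV. R q \<subseteq> P}"
  have cU: "countable (UNIV :: nat set)" by simp
  have cQ: "countable Q"
  proof (rule countable_subset)
    show "Q \<subseteq> D \<times> D \<times> UNIV" unfolding Q_def by blast
    show "countable (D \<times> D \<times> (UNIV :: nat set))" using Dc cU by blast
  qed
  have "P = \<Union>(R ` Q)"
  proof
    show "\<Union>(R ` Q) \<subseteq> P" unfolding Q_def by blast
    show "P \<subseteq> \<Union>(R ` Q)"
    proof
      fix p assume pP: "p \<in> P"
      obtain x y where p: "p = (x, y)" by (cases p)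
      have xyU: "x + y \<in> U" using pP p unfolding P_def by simp
      obtain e where e: "e > 0" "{z. nrm (z - (x + y)) < e} \<subseteq> U" using U xyU unfolding opens_def by blast
      obtain k :: nat where k: "inverse (real (Suc k)) < e" using reals_Archimedean[OF e(1)] by blast
      define r where "r = 1 / real (Suc k)"
      have r: "r > 0" "r < e" using k unfolding r_def by (simp_all add: inverse_eq_divide)
      obtain d1 where d1: "d1 \<in> D" "nrm (x - d1) < r" using Dd r by blast
      obtain d2 where d2: "d2 \<in> D" "nrm (y - d2) < r" using Dd r by blast
      have sub: "R (d1, d2, k) \<subseteq> P"
      proof
        fix q assume q: "q \<in> R (d1, d2, k)"
        obtain a b where ab: "q = (a, b)" by (cases q)
        have a: "nrm (a - d1) < r" and b: "nrm (b - d2) < r" using q ab unfolding R_def r_def by simp_all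
        have t1: "nrm (a - x) \<le> max (nrm (a - d1)) (nrm (d1 - x))" by (rule n_diff_tri)
        have t2: "nrm (b - y) \<le> max (nrm (b - d2)) (nrm (d2 - y))" by (rule n_diff_tri)
        have "nrm (d1 - x) = nrm (x - d1)" by (rule n_sym)
        then have ax: "nrm (a - x) < r" using t1 a d1 by linarith
        have "nrm (d2 - y) = nrm (y - d2)" by (rule n_sym)
        then have "nrm (b - y) < r" using t2 b d2 by linarith
        then have "nrm ((a - x) + (b - y)) < r" using n_add[of "a - x" "b - y"] ax by linarith
        moreover have "(a - x) + (b - y) = (a + b) - (x + y)" by (simp add: algebra_simps)
        ultimately have "nrm ((a + b) - (x + y)) < e" using r by simp
        then have "a + b \<in> U" using e by blast
        then show "q \<in> P" using ab unfolding P_def by simp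
      qed
      have "nrm (x - d1) < 1 / real (Suc k)" "nrm (y - d2) < 1 / real (Suc k)" using d1 d2 unfolding r_def by simp_all
      then have "p \<in> R (d1, d2, k)" using p unfolding R_def by simp
      then show "p \<in> \<Union>(R ` Q)" using sub d1 d2 unfolding Q_def by blast
    qed
  qed
  moreover have "\<Union>(R ` Q) \<in> sets (B \<Otimes>\<^sub>M B)"
  proof (intro sets.countable_UN' cQ, safe)
    fix d1 d2 k assume "(d1, d2, k) \<in> Q"
    show "R (d1, d2, k) \<in> sets (B \<Otimes>\<^sub>M B)" unfolding R_def using ball_in_B by simp
  qed
  ultimately show "(\<lambda>p. fst p + snd p) -` U \<inter> space (B \<Otimes>\<^sub>M B) \<in> sets (B \<Otimes>\<^sub>M B)"
    unfolding P_def by (simp add: space_pair_measure)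
qed

lemma meas_add[measurable (raw)]:
  "f \<in> M \<rightarrow>\<^sub>M B \<Longrightarrow> g \<in> M \<rightarrow>\<^sub>M B \<Longrightarrow> (\<lambda>x. f x + g x) \<in> M \<rightarrow>\<^sub>M B"
  using measurable_compose[OF measurable_Pair measurable_plus, of f M g] by simp

lemma meas_smul[measurable (raw)]:
  "f \<in> M \<rightarrow>\<^sub>M B \<Longrightarrow> (\<lambda>x. smul c (f x)) \<in> M \<rightarrow>\<^sub>M B"
  using measurable_compose[OF _ measurable_smul_c] by blast

lemma meas_zero[measurable]: "(\<lambda>x. 0) \<in> M \<rightarrow>\<^sub>M B"
  by simp

lemma meas_sum[measurable (raw)]:
  "(\<And>i. i \<in> S \<Longrightarrow> f i \<in> M \<rightarrow>\<^sub>M B) \<Longrightarrow> (\<lambda>x. \<Sum>i\<in>S. f i x) \<in> M \<rightarrow>\<^sub>M B"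
proof (induction S rule: infinite_finite_induct)
  case (infinite A) then show ?case by simp
next
  case empty then show ?case by simp
next
  case (insert a A) then show ?case by (simp add: meas_add)
qed

lemma meas_diff[measurable (raw)]:
  "f \<in> M \<rightarrow>\<^sub>M B \<Longrightarrow> g \<in> M \<rightarrow>\<^sub>M B \<Longrightarrow> (\<lambda>x. f x - g x) \<in> M \<rightarrow>\<^sub>M B"
proof -
  assume f: "f \<in> M \<rightarrow>\<^sub>M B" and g: "g \<in> M \<rightarrow>\<^sub>M B"
  have "(\<lambda>x. f x + smul (-1) (g x)) \<in> M \<rightarrow>\<^sub>M B" using f g by (intro meas_add meas_smul)
  then show ?thesis by simp
qed

end




lemma lessThan_2_nat: "{..<2::nat} = {0, 1}" by auto

lemma mx_2: "(\<And>i. 0 \<le> f i) \<Longrightarrow> mx {0, Suc 0} f = max (f 0) (f (Suc 0))"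
  unfolding mx_def by (simp add: max_def)

context nabs begin

lemma a_prod_max_nonneg[simp]: "0 \<le> absv x * max (absv y) (absv z)"
  by (simp add: mult_nonneg_nonneg le_max_iff_disj)

lemma op_unfold: "orthonormal_pair absv a11 a12 a21 a22 \<longleftrightarrow>
  (\<forall>\<beta>. max (absv (\<beta> 0 * a11 + \<beta> (Suc 0) * a21)) (absv (\<beta> 0 * a12 + \<beta> (Suc 0) * a22)) =
        max (absv (\<beta> 0) * max (absv a11) (absv a12)) (absv (\<beta> (Suc 0)) * max (absv a21) (absv a22)))
   \<and> max (absv a11) (absv a12) = 1 \<and> max (absv a21) (absv a22) = 1"
  unfolding orthonormal_pair_def Let_def orthogonal_family_mx kn_norm_mx
  by (simp add: lessThan_2_nat mx_2 mult_nonneg_nonneg)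

lemma op_add: "absv c \<le> 1 \<Longrightarrow> orthonormal_pair absv 1 0 c 1"
proof -
  assume c: "absv c \<le> 1"
  have "max (absv (a + b * c)) (absv b) = max (absv a) (absv b)" for a b
    using ultra_pair[OF c, of a b] by simp
  then show ?thesis unfolding op_unfold using c by simp
qed

lemma op_scale: "absv t = 1 \<Longrightarrow> orthonormal_pair absv t 0 0 1"
  unfolding op_unfold by simp

end

context kspace begin

definition gauss_law :: "'e measure \<Rightarrow> bool" where
  "gauss_law \<nu> \<longleftrightarrow> (\<forall>a11 a12 a21 a22. orthonormal_pair absv a11 a12 a21 a22 \<longrightarrow>
     distr (\<nu> \<Otimes>\<^sub>M \<nu>) (B \<Otimes>\<^sub>M B) (\<lambda>(x, y). (smul a11 x + smul a12 y, smul a21 x + smul a22 y)) = \<nu> \<Otimes>\<^sub>M \<nu>)"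

lemma pair_map_meas[measurable]:
  "(\<lambda>(x, y). (smul a x + smul b y, smul c x + smul d y)) \<in> B \<Otimes>\<^sub>M B \<rightarrow>\<^sub>M B \<Otimes>\<^sub>M B"
  by measurable

end

locale gctx = kspace absv smul nrm D
  for absv :: "'k::field \<Rightarrow> real" and smul :: "'k \<Rightarrow> 'e::ab_group_add \<Rightarrow> 'e" and nrm D +
  fixes \<mu> :: "'e measure"
  assumes prob_mu: "prob_space \<mu>" and sets_mu: "sets \<mu> = sets B" and gauss: "gauss_law \<mu>"
begin

interpretation MU: prob_space \<mu> by (rule prob_mu)

lemma space_mu[simp]: "space \<mu> = UNIV"
  using sets_eq_imp_space_eq[OF sets_mu] by simp

lemma meas_mu_iff: "f \<in> \<mu> \<rightarrow>\<^sub>M N \<longleftrightarrow> f \<in> B \<rightarrow>\<^sub>M N"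
  using measurable_cong_sets[OF sets_mu refl, of N] by blast

lemma gauss_app:
  "orthonormal_pair absv a11 a12 a21 a22 \<Longrightarrow>
   distr (\<mu> \<Otimes>\<^sub>M \<mu>) (B \<Otimes>\<^sub>M B) (\<lambda>(x, y). (smul a11 x + smul a12 y, smul a21 x + smul a22 y)) = \<mu> \<Otimes>\<^sub>M \<mu>"
  using gauss unfolding gauss_law_def by blast

lemma sets_mumu: "sets (\<mu> \<Otimes>\<^sub>M \<mu>) = sets (B \<Otimes>\<^sub>M B)"
  by (intro sets_pair_measure_cong sets_mu)

lemma scale_inv: assumes t: "absv t = 1" shows "distr \<mu> B (smul t) = \<mu>"
proof -
  let ?T = "\<lambda>(x, y). (smul t x + smul 0 y, smul 0 x + smul 1 y)"
  have T: "?T \<in> \<mu> \<Otimes>\<^sub>M \<mu> \<rightarrow>\<^sub>M B \<Otimes>\<^sub>M B"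
    using measurable_cong_sets[OF sets_mumu refl] pair_map_meas by blast
  have fstm: "fst \<in> B \<Otimes>\<^sub>M B \<rightarrow>\<^sub>M B" by simp
  have fstm': "fst \<in> \<mu> \<Otimes>\<^sub>M \<mu> \<rightarrow>\<^sub>M \<mu>" by simp
  have sm: "smul t \<in> \<mu> \<rightarrow>\<^sub>M B" unfolding meas_mu_iff using measurable_smul_c by simp
  have "distr \<mu> B (smul t) = distr (distr (\<mu> \<Otimes>\<^sub>M \<mu>) \<mu> fst) B (smul t)"
    using MU.distr_pair_fst[of \<mu>] by simp
  also have "\<dots> = distr (\<mu> \<Otimes>\<^sub>M \<mu>) B (smul t \<circ> fst)"
    by (rule distr_distr[OF sm fstm'])
  also have "\<dots> = distr (\<mu> \<Otimes>\<^sub>M \<mu>) B (fst \<circ> ?T)"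
    by (intro distr_cong) (auto simp: space_pair_measure)
  also have "\<dots> = distr (distr (\<mu> \<Otimes>\<^sub>M \<mu>) (B \<Otimes>\<^sub>M B) ?T) B fst"
    by (rule distr_distr[OF fstm T, symmetric])
  also have "\<dots> = distr (\<mu> \<Otimes>\<^sub>M \<mu>) B fst"
    using gauss_app[OF op_scale[OF t]] by simp
  also have "\<dots> = distr (\<mu> \<Otimes>\<^sub>M \<mu>) \<mu> fst"
    by (intro distr_cong) (simp_all add: sets_mu)
  also have "\<dots> = \<mu>" by (rule MU.distr_pair_fst)
  finally show ?thesis .
qed

end



context gctx begin

interpretation MU: prob_space \<mu> by (rule prob_mu)

interpretation PS: product_prob_space "\<lambda>_::nat. \<mu>" "UNIV :: nat set"
  by (rule product_prob_spaceI) (rule prob_mu)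

lemma sets_P: "sets (PiM I (\<lambda>_. \<mu>)) = sets (PiM I (\<lambda>_. B))"
  by (intro sets_PiM_cong refl sets_mu)

lemma space_P: "space (PiM I (\<lambda>_. \<mu>)) = space (PiM I (\<lambda>_. B))"
  by (rule sets_eq_imp_space_eq[OF sets_P])

lemma meas_P_iff: "f \<in> PiM I (\<lambda>_. \<mu>) \<rightarrow>\<^sub>M N \<longleftrightarrow> f \<in> PiM I (\<lambda>_. B) \<rightarrow>\<^sub>M N"
  using measurable_cong_sets[OF sets_P refl, of I N] by blast

lemma meas_P_iff2: "f \<in> N \<rightarrow>\<^sub>M PiM I (\<lambda>_. \<mu>) \<longleftrightarrow> f \<in> N \<rightarrow>\<^sub>M PiM I (\<lambda>_. B)"
  using measurable_cong_sets[OF refl sets_P, of N I] by blast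

lemma prob_P: "prob_space (PiM I (\<lambda>_. \<mu>))"
  by (intro prob_space_PiM prob_mu)

lemma distr_target_cong: "sets N = sets N' \<Longrightarrow> distr M N f = distr M N' f"
  by (intro distr_cong) auto

lemma PiM_two:
  fixes p q :: nat
  assumes pq: "p \<noteq> q"
  shows "PiM {p, q} (\<lambda>_. \<mu>) = distr (\<mu> \<Otimes>\<^sub>M \<mu>) (PiM {p, q} (\<lambda>_. B)) (\<lambda>(y, z). \<lambda>i\<in>{p, q}. if i = p then y else z)"
    (is "_ = distr _ _ ?e")
proof (rule sym, rule PS.PiM_eqI)
  show "finite {p, q}" by simp
  show "sets (distr (\<mu> \<Otimes>\<^sub>M \<mu>) (PiM {p, q} (\<lambda>_. B)) ?e) = sets (PiM {p, q} (\<lambda>_. \<mu>))"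
    by (simp add: sets_P)
  fix A assume A: "\<And>i. i \<in> {p, q} \<Longrightarrow> A i \<in> sets \<mu>"
  have em: "?e \<in> \<mu> \<Otimes>\<^sub>M \<mu> \<rightarrow>\<^sub>M PiM {p, q} (\<lambda>_. B)"
  proof -
    have "?e \<in> B \<Otimes>\<^sub>M B \<rightarrow>\<^sub>M PiM {p, q} (\<lambda>_. B)" by measurable
    then show ?thesis using measurable_cong_sets[OF sets_mumu refl] by blast
  qed
  have AP: "Pi\<^sub>E {p, q} A \<in> sets (PiM {p, q} (\<lambda>_. B))"
    using A sets_P[of "{p,q}"] by (metis sets_PiM_I_finite finite.emptyI finite.insertI)
  have pre: "?e -` Pi\<^sub>E {p, q} A \<inter> space (\<mu> \<Otimes>\<^sub>M \<mu>) = A p \<times> A q"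
    using pq by (auto simp: space_pair_measure PiE_iff)
  have "emeasure (distr (\<mu> \<Otimes>\<^sub>M \<mu>) (PiM {p, q} (\<lambda>_. B)) ?e) (Pi\<^sub>E {p, q} A) = emeasure (\<mu> \<Otimes>\<^sub>M \<mu>) (A p \<times> A q)"
    using emeasure_distr[OF em AP] pre by simp
  also have "\<dots> = emeasure \<mu> (A p) * emeasure \<mu> (A q)"
    using A by (intro MU.emeasure_pair_measure_Times) auto
  also have "\<dots> = (\<Prod>i\<in>{p, q}. emeasure \<mu> (A i))" using pq by simp
  finally show "emeasure (distr (\<mu> \<Otimes>\<^sub>M \<mu>) (PiM {p, q} (\<lambda>_. B)) ?e) (Pi\<^sub>E {p, q} A) = (\<Prod>i\<in>{p, q}. emeasure \<mu> (A i))" .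
qed

lemma lift_inv:
  fixes I K :: "nat set"
  assumes fin: "finite I" and KI: "K \<subseteq> I"
    and Pm: "\<Psi> \<in> PiM K (\<lambda>_. B) \<rightarrow>\<^sub>M PiM K (\<lambda>_. B)"
    and inv: "distr (PiM K (\<lambda>_. \<mu>)) (PiM K (\<lambda>_. B)) \<Psi> = PiM K (\<lambda>_. \<mu>)"
  shows "distr (PiM I (\<lambda>_. \<mu>)) (PiM I (\<lambda>_. B))
           (\<lambda>x. merge K (I - K) (\<Psi> (restrict x K), restrict x (I - K))) = PiM I (\<lambda>_. \<mu>)"
proof -
  define R where "R = I - K"
  have KR: "K \<inter> R = {}" "K \<union> R = I" using KI unfolding R_def by auto
  have finK: "finite K" using fin KI finite_subset by blast
  have finR: "finite R" using fin unfolding R_def by simp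
  define Q where "Q = PiM K (\<lambda>_. \<mu>) \<Otimes>\<^sub>M PiM R (\<lambda>_. \<mu>)"
  have dm: "distr Q (PiM I (\<lambda>_. \<mu>)) (merge K R) = PiM I (\<lambda>_. \<mu>)"
    using PS.distr_merge[OF KR(1) finK finR] KR(2) unfolding Q_def by simp
  define F where "F = (\<lambda>x. merge K R (\<Psi> (restrict x K), restrict x R))"
  have Pm': "\<Psi> \<in> PiM K (\<lambda>_. \<mu>) \<rightarrow>\<^sub>M PiM K (\<lambda>_. B)" using Pm meas_P_iff by blast
  have Fm: "F \<in> PiM I (\<lambda>_. \<mu>) \<rightarrow>\<^sub>M PiM I (\<lambda>_. B)"
  proof -
    have r1: "(\<lambda>x. restrict x K) \<in> PiM I (\<lambda>_. \<mu>) \<rightarrow>\<^sub>M PiM K (\<lambda>_. \<mu>)"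
      using KI by (rule measurable_restrict_subset)
    have r2: "(\<lambda>x. restrict x R) \<in> PiM I (\<lambda>_. \<mu>) \<rightarrow>\<^sub>M PiM R (\<lambda>_. B)"
      using KR by (intro measurable_restrict_subset') (auto simp: sets_mu)
    have "(\<lambda>x. (\<Psi> (restrict x K), restrict x R)) \<in> PiM I (\<lambda>_. \<mu>) \<rightarrow>\<^sub>M PiM K (\<lambda>_. B) \<Otimes>\<^sub>M PiM R (\<lambda>_. B)"
      using measurable_compose[OF r1 Pm'] r2 by (intro measurable_Pair) auto
    from measurable_compose[OF this measurable_merge]
    show ?thesis unfolding F_def using KR by simp
  qed
  have mm: "merge K R \<in> Q \<rightarrow>\<^sub>M PiM I (\<lambda>_. \<mu>)"
    using measurable_merge[where I=K and J=R and M="\<lambda>_. \<mu>"] KR unfolding Q_def by simp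
  define G where "G = (\<lambda>(x::nat \<Rightarrow> 'e, y::nat \<Rightarrow> 'e). (\<Psi> x, y))"
  have Gm: "G \<in> Q \<rightarrow>\<^sub>M PiM K (\<lambda>_. B) \<Otimes>\<^sub>M PiM R (\<lambda>_. \<mu>)"
    unfolding G_def Q_def using Pm' by measurable
  have mm2: "merge K R \<in> PiM K (\<lambda>_. B) \<Otimes>\<^sub>M PiM R (\<lambda>_. \<mu>) \<rightarrow>\<^sub>M PiM I (\<lambda>_. B)"
  proof -
    have "merge K R \<in> PiM K (\<lambda>_. B) \<Otimes>\<^sub>M PiM R (\<lambda>_. B) \<rightarrow>\<^sub>M PiM (K \<union> R) (\<lambda>_. B)"
      by (rule measurable_merge)
    moreover have "sets (PiM K (\<lambda>_. B) \<Otimes>\<^sub>M PiM R (\<lambda>_. \<mu>)) = sets (PiM K (\<lambda>_. B) \<Otimes>\<^sub>M PiM R (\<lambda>_. B))"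
      by (intro sets_pair_measure_cong refl sets_P)
    ultimately show ?thesis using KR measurable_cong_sets by metis
  qed
  have DG: "distr Q (PiM K (\<lambda>_. B) \<Otimes>\<^sub>M PiM R (\<lambda>_. \<mu>)) G = Q"
  proof -
    have "distr Q (PiM K (\<lambda>_. B) \<Otimes>\<^sub>M PiM R (\<lambda>_. \<mu>)) G =
          distr (PiM K (\<lambda>_. \<mu>)) (PiM K (\<lambda>_. B)) \<Psi> \<Otimes>\<^sub>M distr (PiM R (\<lambda>_. \<mu>)) (PiM R (\<lambda>_. \<mu>)) (\<lambda>x. x)"
      unfolding Q_def G_def
      by (rule pair_measure_distr[symmetric, OF Pm']) (auto intro: prob_space_imp_sigma_finite prob_P)
    also have "\<dots> = Q" unfolding Q_def inv by simp
    finally show ?thesis .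
  qed
  have "distr (PiM I (\<lambda>_. \<mu>)) (PiM I (\<lambda>_. B)) F = distr (distr Q (PiM I (\<lambda>_. \<mu>)) (merge K R)) (PiM I (\<lambda>_. B)) F"
    using dm by simp
  also have "\<dots> = distr Q (PiM I (\<lambda>_. B)) (F \<circ> merge K R)"
    by (rule distr_distr[OF Fm mm])
  also have "\<dots> = distr Q (PiM I (\<lambda>_. B)) (merge K R \<circ> G)"
  proof (rule distr_cong)
    fix z assume "z \<in> space Q"
    then obtain x y where z: "z = (x, y)" "x \<in> PiE K (\<lambda>_. UNIV)" "y \<in> PiE R (\<lambda>_. UNIV)"
      unfolding Q_def by (auto simp: space_pair_measure space_PiM)
    have r1: "restrict (merge K R (x, y)) K = x"
      using z KR by (auto simp: restrict_def fun_eq_iff PiE_iff extensional_def merge_def)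
    have r2: "restrict (merge K R (x, y)) R = y"
      using z KR by (auto simp: restrict_def fun_eq_iff PiE_iff extensional_def merge_def)
    show "(F \<circ> merge K R) z = (merge K R \<circ> G) z"
      unfolding F_def G_def comp_def z(1) by (simp only: r1 r2 case_prod_conv)
  qed simp_all
  also have "\<dots> = distr (distr Q (PiM K (\<lambda>_. B) \<Otimes>\<^sub>M PiM R (\<lambda>_. \<mu>)) G) (PiM I (\<lambda>_. B)) (merge K R)"
    by (rule distr_distr[OF mm2 Gm, symmetric])
  also have "\<dots> = distr Q (PiM I (\<lambda>_. B)) (merge K R)" using DG by simp
  also have "\<dots> = distr Q (PiM I (\<lambda>_. \<mu>)) (merge K R)"
    by (rule distr_target_cong) (rule sets_P[symmetric])
  also have "\<dots> = PiM I (\<lambda>_. \<mu>)" by (rule dm)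
  finally show ?thesis unfolding F_def R_def .
qed

end



context gctx begin

interpretation MU: prob_space \<mu> by (rule prob_mu)

interpretation PS: product_prob_space "\<lambda>_::nat. \<mu>" "UNIV :: nat set"
  by (rule product_prob_spaceI) (rule prob_mu)

lemma comp_inv:
  fixes I :: "nat set"
  assumes fm: "f \<in> PiM I (\<lambda>_. B) \<rightarrow>\<^sub>M PiM I (\<lambda>_. B)" and gm: "g \<in> PiM I (\<lambda>_. B) \<rightarrow>\<^sub>M PiM I (\<lambda>_. B)"
    and fi: "distr (PiM I (\<lambda>_. \<mu>)) (PiM I (\<lambda>_. B)) f = PiM I (\<lambda>_. \<mu>)"
    and gi: "distr (PiM I (\<lambda>_. \<mu>)) (PiM I (\<lambda>_. B)) g = PiM I (\<lambda>_. \<mu>)"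
    and h: "\<And>x. x \<in> space (PiM I (\<lambda>_. B)) \<Longrightarrow> h x = g (f x)"
  shows "distr (PiM I (\<lambda>_. \<mu>)) (PiM I (\<lambda>_. B)) h = PiM I (\<lambda>_. \<mu>)"
proof -
  have fm': "f \<in> PiM I (\<lambda>_. \<mu>) \<rightarrow>\<^sub>M PiM I (\<lambda>_. B)" using fm meas_P_iff by blast
  have gm': "g \<in> PiM I (\<lambda>_. B) \<rightarrow>\<^sub>M PiM I (\<lambda>_. B)" using gm by blast
  have "distr (PiM I (\<lambda>_. \<mu>)) (PiM I (\<lambda>_. B)) h = distr (PiM I (\<lambda>_. \<mu>)) (PiM I (\<lambda>_. B)) (g \<circ> f)"
    using h space_P by (intro distr_cong) auto
  also have "\<dots> = distr (distr (PiM I (\<lambda>_. \<mu>)) (PiM I (\<lambda>_. B)) f) (PiM I (\<lambda>_. B)) g"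
    by (rule distr_distr[OF gm' fm', symmetric])
  also have "\<dots> = PiM I (\<lambda>_. \<mu>)" using fi gi by simp
  finally show ?thesis .
qed

lemma id_inv:
  fixes I :: "nat set"
  assumes h: "\<And>x. x \<in> space (PiM I (\<lambda>_. B)) \<Longrightarrow> h x = x"
  shows "distr (PiM I (\<lambda>_. \<mu>)) (PiM I (\<lambda>_. B)) h = PiM I (\<lambda>_. \<mu>)"
proof -
  have "distr (PiM I (\<lambda>_. \<mu>)) (PiM I (\<lambda>_. B)) h = distr (PiM I (\<lambda>_. \<mu>)) (PiM I (\<lambda>_. \<mu>)) (\<lambda>x. x)"
  proof (rule distr_cong)
    show "sets (PiM I (\<lambda>_. B)) = sets (PiM I (\<lambda>_. \<mu>))" by (rule sets_P[symmetric])
  qed (use h space_P in auto)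
  also have "\<dots> = PiM I (\<lambda>_. \<mu>)" by (rule distr_id2) simp
  finally show ?thesis .
qed

lemma add_inv:
  fixes I :: "nat set" and p q :: nat
  assumes fin: "finite I" and pI: "p \<in> I" and qI: "q \<in> I" and pq: "p \<noteq> q" and c: "absv c \<le> 1"
  shows "distr (PiM I (\<lambda>_. \<mu>)) (PiM I (\<lambda>_. B)) (\<lambda>x. \<lambda>i\<in>I. if i = q then x q + smul c (x p) else x i) = PiM I (\<lambda>_. \<mu>)"
proof -
  define K where "K = {p, q}"
  define \<Psi> where "\<Psi> = (\<lambda>y. \<lambda>i\<in>K. if i = q then y q + smul c (y p) else (y i :: 'e))"
  have Pm: "\<Psi> \<in> PiM K (\<lambda>_. B) \<rightarrow>\<^sub>M PiM K (\<lambda>_. B)"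
    unfolding \<Psi>_def K_def by measurable
  define e where "e = (\<lambda>(y, z). \<lambda>i\<in>{p, q}. if i = p then y else (z::'e))"
  define T where "T = (\<lambda>(x, y). (smul 1 x + smul 0 y, smul c x + smul 1 (y::'e)))"
  have em: "e \<in> B \<Otimes>\<^sub>M B \<rightarrow>\<^sub>M PiM K (\<lambda>_. B)" unfolding e_def K_def by measurable
  have em': "e \<in> \<mu> \<Otimes>\<^sub>M \<mu> \<rightarrow>\<^sub>M PiM K (\<lambda>_. B)" using em measurable_cong_sets[OF sets_mumu refl] by blast
  have Tm: "T \<in> \<mu> \<Otimes>\<^sub>M \<mu> \<rightarrow>\<^sub>M B \<Otimes>\<^sub>M B"
    using pair_map_meas measurable_cong_sets[OF sets_mumu refl] unfolding T_def by blast
  have P2: "PiM K (\<lambda>_. \<mu>) = distr (\<mu> \<Otimes>\<^sub>M \<mu>) (PiM K (\<lambda>_. B)) e"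
    unfolding K_def e_def by (rule PiM_two[OF pq])
  have inv: "distr (PiM K (\<lambda>_. \<mu>)) (PiM K (\<lambda>_. B)) \<Psi> = PiM K (\<lambda>_. \<mu>)"
  proof -
    have "distr (PiM K (\<lambda>_. \<mu>)) (PiM K (\<lambda>_. B)) \<Psi> = distr (\<mu> \<Otimes>\<^sub>M \<mu>) (PiM K (\<lambda>_. B)) (\<Psi> \<circ> e)"
      unfolding P2 by (rule distr_distr[OF Pm em'])
    also have "\<dots> = distr (\<mu> \<Otimes>\<^sub>M \<mu>) (PiM K (\<lambda>_. B)) (e \<circ> T)"
      using pq by (intro distr_cong) (auto simp: \<Psi>_def e_def T_def K_def fun_eq_iff add.commute)
    also have "\<dots> = distr (distr (\<mu> \<Otimes>\<^sub>M \<mu>) (B \<Otimes>\<^sub>M B) T) (PiM K (\<lambda>_. B)) e"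
      by (rule distr_distr[OF em Tm, symmetric])
    also have "\<dots> = PiM K (\<lambda>_. \<mu>)"
      using gauss_app[OF op_add[OF c]] P2 unfolding T_def by simp
    finally show ?thesis .
  qed
  have KI: "K \<subseteq> I" using pI qI unfolding K_def by auto
  have L: "distr (PiM I (\<lambda>_. \<mu>)) (PiM I (\<lambda>_. B))
           (\<lambda>x. merge K (I - K) (\<Psi> (restrict x K), restrict x (I - K))) = PiM I (\<lambda>_. \<mu>)"
    by (rule lift_inv[OF fin KI Pm inv])
  show ?thesis
  proof (rule trans[OF _ L], rule distr_cong)
    fix x assume "x \<in> space (PiM I (\<lambda>_. \<mu>))"
    show "(\<lambda>i\<in>I. if i = q then x q + smul c (x p) else x i) = merge K (I - K) (\<Psi> (restrict x K), restrict x (I - K))"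
      using KI pI qI by (auto simp: fun_eq_iff merge_def \<Psi>_def K_def)
  qed simp_all
qed

lemma scale_inv_P:
  fixes I :: "nat set" and q :: nat
  assumes fin: "finite I" and qI: "q \<in> I" and t: "absv t = 1"
  shows "distr (PiM I (\<lambda>_. \<mu>)) (PiM I (\<lambda>_. B)) (\<lambda>x. \<lambda>i\<in>I. if i = q then smul t (x q) else x i) = PiM I (\<lambda>_. \<mu>)"
proof -
  define K where "K = {q}"
  define \<Psi> where "\<Psi> = (\<lambda>y. \<lambda>i\<in>K. smul t (y i :: 'e))"
  have Pm: "\<Psi> \<in> PiM K (\<lambda>_. B) \<rightarrow>\<^sub>M PiM K (\<lambda>_. B)"
    unfolding \<Psi>_def K_def by measurable
  have inv: "distr (PiM K (\<lambda>_. \<mu>)) (PiM K (\<lambda>_. B)) \<Psi> = PiM K (\<lambda>_. \<mu>)"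
  proof -
    have sm: "smul t \<in> \<mu> \<rightarrow>\<^sub>M \<mu>"
      using measurable_smul_c measurable_cong_sets[OF sets_mu sets_mu] by blast
    have "distr (PiM K (\<lambda>_. \<mu>)) (PiM K (\<lambda>_. B)) \<Psi> = distr (PiM K (\<lambda>_. \<mu>)) (PiM K (\<lambda>_. \<mu>)) (compose K (smul t))"
      using sets_P by (intro distr_cong) (auto simp: \<Psi>_def compose_def fun_eq_iff)
    also have "\<dots> = PiM K (\<lambda>i. distr \<mu> \<mu> (smul t))"
      by (rule distr_PiM_finite_prob_space') (auto simp: K_def prob_mu sm)
    also have "distr \<mu> \<mu> (smul t) = distr \<mu> B (smul t)"
      by (rule distr_target_cong) (rule sets_mu)
    also have "\<dots> = \<mu>" by (rule scale_inv[OF t])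
    finally show ?thesis .
  qed
  have KI: "K \<subseteq> I" using qI unfolding K_def by auto
  have L: "distr (PiM I (\<lambda>_. \<mu>)) (PiM I (\<lambda>_. B))
           (\<lambda>x. merge K (I - K) (\<Psi> (restrict x K), restrict x (I - K))) = PiM I (\<lambda>_. \<mu>)"
    by (rule lift_inv[OF fin KI Pm inv])
  show ?thesis
  proof (rule trans[OF _ L], rule distr_cong)
    fix x assume "x \<in> space (PiM I (\<lambda>_. \<mu>))"
    show "(\<lambda>i\<in>I. if i = q then smul t (x q) else x i) = merge K (I - K) (\<Psi> (restrict x K), restrict x (I - K))"
      using KI qI by (auto simp: fun_eq_iff merge_def \<Psi>_def K_def)
  qed simp_all
qed

end



context gctx begin

lemma rows_inv:
  fixes J S :: "nat set" and j0 :: nat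
  assumes fin: "finite J" and j0: "j0 \<in> J" and S: "S \<subseteq> J - {j0}" and d: "\<forall>j\<in>S. absv (d j) \<le> 1"
  shows "distr (PiM J (\<lambda>_. \<mu>)) (PiM J (\<lambda>_. B)) (\<lambda>z. \<lambda>j\<in>J. if j \<in> S then z j + smul (d j) (z j0) else z j) = PiM J (\<lambda>_. \<mu>)"
proof -
  have "finite S" using fin S finite_subset by blast
  then show ?thesis using S d
  proof (induction S rule: finite_induct)
    case empty
    show ?case by (rule id_inv) (auto simp: space_PiM PiE_restrict)
  next
    case (insert s S)
    have sJ: "s \<in> J" "s \<noteq> j0" using insert by auto
    show ?case
    proof (rule comp_inv[OF _ _ insert.IH add_inv[OF fin j0 sJ(1) sJ(2)[symmetric], of "d s"]])
      show "(\<lambda>z. \<lambda>j\<in>J. if j \<in> S then z j + smul (d j) (z j0) else z j) \<in> PiM J (\<lambda>_. B) \<rightarrow>\<^sub>M PiM J (\<lambda>_. B)"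
        using j0 by measurable
      show "(\<lambda>x. \<lambda>i\<in>J. if i = s then x s + smul (d s) (x j0) else x i) \<in> PiM J (\<lambda>_. B) \<rightarrow>\<^sub>M PiM J (\<lambda>_. B)"
        using j0 sJ by measurable
      show "S \<subseteq> J - {j0}" "\<forall>j\<in>S. absv (d j) \<le> 1" "absv (d s) \<le> 1" using insert by auto
      fix x assume "x \<in> space (PiM J (\<lambda>_. B))"
      show "(\<lambda>j\<in>J. if j \<in> insert s S then x j + smul (d j) (x j0) else x j) =
            (\<lambda>i\<in>J. if i = s then (\<lambda>j\<in>J. if j \<in> S then x j + smul (d j) (x j0) else x j) s +
                smul (d s) ((\<lambda>j\<in>J. if j \<in> S then x j + smul (d j) (x j0) else x j) j0)
              else (\<lambda>j\<in>J. if j \<in> S then x j + smul (d j) (x j0) else x j) i)"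
        using insert j0 sJ by (auto simp: fun_eq_iff)
    qed
  qed
qed

lemma cols_inv:
  fixes N S :: "nat set" and i0 :: nat
  assumes fin: "finite N" and i0: "i0 \<in> N" and t: "absv t = 1" and S: "S \<subseteq> N - {i0}" and c: "\<forall>k\<in>S. absv (c k) \<le> 1"
  shows "distr (PiM N (\<lambda>_. \<mu>)) (PiM N (\<lambda>_. B))
    (\<lambda>x. \<lambda>i\<in>N. if i = i0 then smul t (x i0) + (\<Sum>k\<in>S. smul (c k) (x k)) else x i) = PiM N (\<lambda>_. \<mu>)"
proof -
  have "finite S" using fin S finite_subset by blast
  then show ?thesis using S c
  proof (induction S rule: finite_induct)
    case empty
    have e: "(\<lambda>x. \<lambda>i\<in>N. if i = i0 then smul t (x i0) + (\<Sum>k\<in>{}. smul (c k) (x k)) else x i) =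
      (\<lambda>x. \<lambda>i\<in>N. if i = i0 then smul t (x i0) else x i)" by (simp cong: if_cong)
    show ?case unfolding e by (rule scale_inv_P[OF fin i0 t])
  next
    case (insert s S)
    have sN: "s \<in> N" "s \<noteq> i0" using insert by auto
    have SN: "\<And>k. k \<in> S \<Longrightarrow> k \<in> N" using insert by auto
    show ?case
    proof (rule comp_inv[OF _ _ insert.IH add_inv[OF fin sN(1) i0 sN(2), of "c s"]])
      show "(\<lambda>x. \<lambda>i\<in>N. if i = i0 then smul t (x i0) + (\<Sum>k\<in>S. smul (c k) (x k)) else x i) \<in> PiM N (\<lambda>_. B) \<rightarrow>\<^sub>M PiM N (\<lambda>_. B)"
        using i0 SN by measurable
      show "(\<lambda>x. \<lambda>i\<in>N. if i = i0 then x i0 + smul (c s) (x s) else x i) \<in> PiM N (\<lambda>_. B) \<rightarrow>\<^sub>M PiM N (\<lambda>_. B)"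
        using i0 sN by measurable
      show "S \<subseteq> N - {i0}" "\<forall>k\<in>S. absv (c k) \<le> 1" "absv (c s) \<le> 1" using insert by auto
      fix x assume "x \<in> space (PiM N (\<lambda>_. B))"
      show "(\<lambda>i\<in>N. if i = i0 then smul t (x i0) + (\<Sum>k\<in>insert s S. smul (c k) (x k)) else x i) =
        (\<lambda>i\<in>N. if i = i0 then (\<lambda>i\<in>N. if i = i0 then smul t (x i0) + (\<Sum>k\<in>S. smul (c k) (x k)) else x i) i0 +
             smul (c s) ((\<lambda>i\<in>N. if i = i0 then smul t (x i0) + (\<Sum>k\<in>S. smul (c k) (x k)) else x i) s)
           else (\<lambda>i\<in>N. if i = i0 then smul t (x i0) + (\<Sum>k\<in>S. smul (c k) (x k)) else x i) i)"
        using insert i0 sN by (auto simp: fun_eq_iff add_ac)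
    qed
  qed
qed

end



definition orthoI :: "('k::field \<Rightarrow> real) \<Rightarrow> nat set \<Rightarrow> nat set \<Rightarrow> (nat \<Rightarrow> nat \<Rightarrow> 'k) \<Rightarrow> bool" where
  "orthoI absv N J u \<longleftrightarrow> (\<forall>\<beta>. mx N (\<lambda>i. absv (\<Sum>j\<in>J. \<beta> j * u j i)) = mx J (\<lambda>j. absv (\<beta> j)))"

context nabs begin

lemma orth_row:
  assumes J: "finite J" and o: "orthoI absv N J u" and j: "j \<in> J"
  shows "mx N (\<lambda>i. absv (u j i)) = 1"
proof -
  define \<beta> where "\<beta> = (\<lambda>k. if k = j then (1::'k) else 0)"
  have s: "(\<Sum>k\<in>J. \<beta> k * u k i) = u j i" for i
  proof -
    have "(\<Sum>k\<in>J. \<beta> k * u k i) = (\<Sum>k\<in>J. if k = j then u k i else 0)"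
      unfolding \<beta>_def by (intro sum.cong) auto
    also have "\<dots> = u j i" using J j by (simp add: sum.delta)
    finally show ?thesis .
  qed
  have m: "mx J (\<lambda>k. absv (\<beta> k)) = 1"
  proof (rule antisym)
    show "mx J (\<lambda>k. absv (\<beta> k)) \<le> 1" using J by (simp add: mx_le_iff \<beta>_def)
    show "1 \<le> mx J (\<lambda>k. absv (\<beta> k))" using mx_ge[OF J j, of "\<lambda>k. absv (\<beta> k)"] by (simp add: \<beta>_def)
  qed
  have "mx N (\<lambda>i. absv (\<Sum>k\<in>J. \<beta> k * u k i)) = mx J (\<lambda>k. absv (\<beta> k))"
    using o unfolding orthoI_def by blast
  then show ?thesis unfolding s m .
qed

lemma mx_drop_zero:
  assumes N: "finite N" and f0: "f i0 = 0"
  shows "mx N f = mx (N - {i0}) f"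
  by (rule mx_eqI) (use N f0 in auto)

lemma orth_reduce:
  assumes N: "finite N" and J: "finite J" and o: "orthoI absv N J u"
    and j0: "j0 \<in> J" and i0: "i0 \<in> N" and t: "u j0 i0 \<noteq> 0"
    and d: "\<And>j. d j = u j i0 / u j0 i0" and dle: "\<And>j. j \<in> J \<Longrightarrow> absv (d j) \<le> 1"
  shows "orthoI absv (N - {i0}) (J - {j0}) (\<lambda>j i. u j i - d j * u j0 i)"
  unfolding orthoI_def
proof
  fix \<beta> :: "nat \<Rightarrow> 'k"
  define J' where "J' = J - {j0}"
  define s where "s = (\<Sum>j\<in>J'. \<beta> j * d j)"
  define \<beta>' where "\<beta>' = \<beta>(j0 := - s)"
  have finJ': "finite J'" using J unfolding J'_def by simp
  have eq: "(\<Sum>j\<in>J'. \<beta> j * (u j i - d j * u j0 i)) = (\<Sum>j\<in>J. \<beta>' j * u j i)" for i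
  proof -
    have "(\<Sum>j\<in>J. \<beta>' j * u j i) = \<beta>' j0 * u j0 i + (\<Sum>j\<in>J'. \<beta>' j * u j i)"
      using J j0 unfolding J'_def by (simp add: sum.remove)
    also have "(\<Sum>j\<in>J'. \<beta>' j * u j i) = (\<Sum>j\<in>J'. \<beta> j * u j i)"
      unfolding \<beta>'_def J'_def by (intro sum.cong) auto
    finally have "(\<Sum>j\<in>J. \<beta>' j * u j i) = - s * u j0 i + (\<Sum>j\<in>J'. \<beta> j * u j i)"
      unfolding \<beta>'_def by simp
    moreover have "(\<Sum>j\<in>J'. \<beta> j * (u j i - d j * u j0 i)) = (\<Sum>j\<in>J'. \<beta> j * u j i) - s * u j0 i"
    proof -
      have "(\<Sum>j\<in>J'. \<beta> j * (u j i - d j * u j0 i)) = (\<Sum>j\<in>J'. \<beta> j * u j i - (\<beta> j * d j) * u j0 i)"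
        by (intro sum.cong) (auto simp: right_diff_distrib mult.assoc)
      also have "\<dots> = (\<Sum>j\<in>J'. \<beta> j * u j i) - (\<Sum>j\<in>J'. (\<beta> j * d j) * u j0 i)"
        by (rule sum_subtractf)
      also have "(\<Sum>j\<in>J'. (\<beta> j * d j) * u j0 i) = s * u j0 i"
        unfolding s_def by (rule sum_distrib_right[symmetric])
      finally show ?thesis .
    qed
    ultimately show ?thesis by simp
  qed
  have zero: "(\<Sum>j\<in>J'. \<beta> j * (u j i0 - d j * u j0 i0)) = 0"
    using t by (simp add: d)
  have "mx (N - {i0}) (\<lambda>i. absv (\<Sum>j\<in>J'. \<beta> j * (u j i - d j * u j0 i)))
      = mx N (\<lambda>i. absv (\<Sum>j\<in>J'. \<beta> j * (u j i - d j * u j0 i)))"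
    by (rule mx_drop_zero[symmetric]) (use N zero in auto)
  also have "\<dots> = mx N (\<lambda>i. absv (\<Sum>j\<in>J. \<beta>' j * u j i))" using eq by simp
  also have "\<dots> = mx J (\<lambda>j. absv (\<beta>' j))" using o unfolding orthoI_def by blast
  also have "\<dots> = mx J' (\<lambda>j. absv (\<beta> j))"
  proof (rule mx_eqI[OF J finJ'])
    fix r :: real assume r: "0 \<le> r"
    show "(\<forall>a\<in>J. absv (\<beta>' a) \<le> r) \<longleftrightarrow> (\<forall>b\<in>J'. absv (\<beta> b) \<le> r)"
    proof
      assume h: "\<forall>a\<in>J. absv (\<beta>' a) \<le> r"
      show "\<forall>b\<in>J'. absv (\<beta> b) \<le> r"
      proof
        fix b assume b: "b \<in> J'"
        then have "b \<in> J" "b \<noteq> j0" unfolding J'_def by auto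
        then show "absv (\<beta> b) \<le> r" using h unfolding \<beta>'_def by auto
      qed
    next
      assume h: "\<forall>b\<in>J'. absv (\<beta> b) \<le> r"
      have "absv s \<le> mx J' (\<lambda>j. absv (\<beta> j * d j))" unfolding s_def by (rule a_sum_le[OF finJ'])
      also have "\<dots> \<le> r"
      proof -
        have "\<forall>j\<in>J'. absv (\<beta> j * d j) \<le> r"
        proof
          fix j assume jJ: "j \<in> J'"
          have "absv (\<beta> j) * absv (d j) \<le> absv (\<beta> j) * 1"
            using dle[of j] jJ unfolding J'_def by (intro mult_left_mono) auto
          moreover have "absv (\<beta> j) \<le> r" using h jJ by blast
          ultimately show "absv (\<beta> j * d j) \<le> r" by simp
        qed
        then show ?thesis using r finJ' by (simp add: mx_le_iff)
      qed
      finally have "absv s \<le> r" .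
      then show "\<forall>a\<in>J. absv (\<beta>' a) \<le> r" using h unfolding \<beta>'_def J'_def by auto
    qed
  qed
  finally show "mx (N - {i0}) (\<lambda>i. absv (\<Sum>j\<in>J - {j0}. \<beta> j * (u j i - d j * u j0 i))) = mx (J - {j0}) (\<lambda>j. absv (\<beta> j))"
    unfolding J'_def .
qed

end




context kspace begin

lemma lin_comb:
  "(\<Sum>i\<in>N. smul (a i - d * b i) (x i)) + smul d (\<Sum>i\<in>N. smul (b i) (x i)) = (\<Sum>i\<in>N. smul (a i) (x i))"
proof -
  have "(\<Sum>i\<in>N. smul (a i - d * b i) (x i)) = (\<Sum>i\<in>N. smul (a i) (x i) - smul d (smul (b i) (x i)))"
    by (intro sum.cong) (auto simp: scale_left_diff_distrib)
  also have "\<dots> = (\<Sum>i\<in>N. smul (a i) (x i)) - (\<Sum>i\<in>N. smul d (smul (b i) (x i)))"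
    by (rule sum_subtractf)
  also have "(\<Sum>i\<in>N. smul d (smul (b i) (x i))) = smul d (\<Sum>i\<in>N. smul (b i) (x i))"
    by (rule scale_sum_right[symmetric])
  finally show ?thesis by simp
qed

end

context gctx begin

interpretation MU: prob_space \<mu> by (rule prob_mu)

interpretation PS: product_prob_space "\<lambda>_::nat. \<mu>" "UNIV :: nat set"
  by (rule product_prob_spaceI) (rule prob_mu)

lemma ins_meas:
  fixes N' :: "nat set" and i0 :: nat
  shows "(\<lambda>(y, X). X(i0 := y)) \<in> \<mu> \<Otimes>\<^sub>M PiM N' (\<lambda>_. \<mu>) \<rightarrow>\<^sub>M PiM (insert i0 N') (\<lambda>_. \<mu>)"
proof -
  have "(\<lambda>p. (snd p)(i0 := fst p)) \<in> \<mu> \<Otimes>\<^sub>M PiM N' (\<lambda>_. \<mu>) \<rightarrow>\<^sub>M PiM (insert i0 N') (\<lambda>_. \<mu>)"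
    by (rule measurable_fun_upd[where J = N']) auto
  then show ?thesis by (simp add: case_prod_beta')
qed

lemma core:
  fixes N J :: "nat set" and u :: "nat \<Rightarrow> nat \<Rightarrow> 'k"
  assumes "finite N" "finite J" "orthoI absv N J u"
  shows "distr (PiM N (\<lambda>_. \<mu>)) (PiM J (\<lambda>_. B)) (\<lambda>x. \<lambda>j\<in>J. \<Sum>i\<in>N. smul (u j i) (x i)) = PiM J (\<lambda>_. \<mu>)"
  using assms
proof (induction "card N" arbitrary: N J u rule: less_induct)
  case less
  note finN = less.prems(1) and finJ = less.prems(2) and orth = less.prems(3)
  show ?case
  proof (cases "J = {}")
    case True
    have fm: "(\<lambda>x. \<lambda>j\<in>{}. \<Sum>i\<in>N. smul (u j i) (x i)) \<in> PiM N (\<lambda>_. \<mu>) \<rightarrow>\<^sub>M PiM {} (\<lambda>_. B)"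
      unfolding meas_P_iff by measurable
    show ?thesis unfolding True
    proof (rule PS.PiM_eqI)
      show "finite {}" by simp
      show "sets (distr (PiM N (\<lambda>_. \<mu>)) (PiM {} (\<lambda>_. B)) (\<lambda>x. \<lambda>j\<in>{}. \<Sum>i\<in>N. smul (u j i) (x i))) = sets (PiM {} (\<lambda>_. \<mu>))"
        by (simp add: sets_P)
      fix A :: "nat \<Rightarrow> 'e set"
      have Ae: "Pi\<^sub>E {} A \<in> sets (PiM {} (\<lambda>_. B))" by (simp add: sets_PiM_empty)
      have pre: "(\<lambda>x. \<lambda>j\<in>{}. \<Sum>i\<in>N. smul (u j i) (x i)) -` Pi\<^sub>E {} A \<inter> space (PiM N (\<lambda>_. \<mu>)) = space (PiM N (\<lambda>_. \<mu>))"
        by auto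
      have "emeasure (distr (PiM N (\<lambda>_. \<mu>)) (PiM {} (\<lambda>_. B)) (\<lambda>x. \<lambda>j\<in>{}. \<Sum>i\<in>N. smul (u j i) (x i))) (Pi\<^sub>E {} A)
          = emeasure (PiM N (\<lambda>_. \<mu>)) (space (PiM N (\<lambda>_. \<mu>)))"
        using emeasure_distr[OF fm Ae] pre by simp
      also have "\<dots> = 1" using prob_P prob_space.emeasure_space_1 by blast
      finally show "emeasure (distr (PiM N (\<lambda>_. \<mu>)) (PiM {} (\<lambda>_. B)) (\<lambda>x. \<lambda>j\<in>{}. \<Sum>i\<in>N. smul (u j i) (x i))) (Pi\<^sub>E {} A)
          = (\<Prod>i\<in>{}. emeasure \<mu> (A i))" by simp
    qed
  next
    case False
    then obtain j0 where j0: "j0 \<in> J" by blast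
    have rown: "mx N (\<lambda>i. absv (u j0 i)) = 1" by (rule orth_row[OF finJ orth j0])
    obtain i0 where i0: "i0 \<in> N" "absv (u j0 i0) = 1"
      using mx_attained[OF finN, of "\<lambda>i. absv (u j0 i)"] rown by auto
    have ent: "absv (u j i) \<le> 1" if "j \<in> J" "i \<in> N" for j i
      using mx_ge[OF finN that(2), of "\<lambda>i. absv (u j i)"] orth_row[OF finJ orth that(1)] by simp
    define t where "t = u j0 i0"
    have t: "absv t = 1" "t \<noteq> 0" using i0 unfolding t_def by auto
    define d where "d = (\<lambda>j. u j i0 / t)"
    have dle: "absv (d j) \<le> 1" if "j \<in> J" for j
      using ent[OF that i0(1)] t unfolding d_def by simp
    define u'' where "u'' = (\<lambda>j i. u j i - d j * u j0 i)"
    define N' where "N' = N - {i0}"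
    define J' where "J' = J - {j0}"
    have orth': "orthoI absv N' J' u''"
      unfolding N'_def J'_def u''_def
      by (rule orth_reduce[OF finN finJ orth j0 i0(1)]) (use t dle in \<open>auto simp: d_def t_def\<close>)
    have cardN': "card N' < card N" unfolding N'_def by (rule card_Diff1_less[OF finN i0(1)])
    have finN': "finite N'" "finite J'" using finN finJ unfolding N'_def J'_def by auto
    define F where "F = (\<lambda>X. \<lambda>j\<in>J'. \<Sum>i\<in>N'. smul (u'' j i) (X i))"
    have IH: "distr (PiM N' (\<lambda>_. \<mu>)) (PiM J' (\<lambda>_. B)) F = PiM J' (\<lambda>_. \<mu>)"
      unfolding F_def by (rule less.hyps[OF cardN' finN' orth'])
    define G where "G = (\<lambda>y. \<lambda>j\<in>J. if j = j0 then y i0 else \<Sum>i\<in>N'. smul (u'' j i) (y i))"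
    define \<Phi> where "\<Phi> = (\<lambda>x. \<lambda>i\<in>N. if i = i0 then smul t (x i0) + (\<Sum>k\<in>N'. smul (u j0 k) (x k)) else x i)"
    define L'' where "L'' = (\<lambda>x. \<lambda>j\<in>J. if j = j0 then \<Sum>i\<in>N. smul (u j0 i) (x i) else \<Sum>i\<in>N. smul (u'' j i) (x i))"
    define V where "V = (\<lambda>z. \<lambda>j\<in>J. if j \<in> J' then z j + smul (d j) (z j0) else z j)"
    define L where "L = (\<lambda>x. \<lambda>j\<in>J. \<Sum>i\<in>N. smul (u j i) (x i))"
    have N'N: "\<And>k. k \<in> N' \<Longrightarrow> k \<in> N" unfolding N'_def by auto
    have J'J: "\<And>k. k \<in> J' \<Longrightarrow> k \<in> J" unfolding J'_def by auto
    have Phim: "\<Phi> \<in> PiM N (\<lambda>_. B) \<rightarrow>\<^sub>M PiM N (\<lambda>_. B)"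
      unfolding \<Phi>_def using i0 N'N by measurable
    have Gm: "G \<in> PiM N (\<lambda>_. B) \<rightarrow>\<^sub>M PiM J (\<lambda>_. B)"
      unfolding G_def using i0 N'N by measurable
    have Lm'': "L'' \<in> PiM N (\<lambda>_. B) \<rightarrow>\<^sub>M PiM J (\<lambda>_. B)"
      unfolding L''_def by measurable
    have Vm: "V \<in> PiM J (\<lambda>_. B) \<rightarrow>\<^sub>M PiM J (\<lambda>_. B)"
      unfolding V_def using j0 by measurable
    have Phi_inv: "distr (PiM N (\<lambda>_. \<mu>)) (PiM N (\<lambda>_. B)) \<Phi> = PiM N (\<lambda>_. \<mu>)"
    proof -
      have s1: "N' \<subseteq> N - {i0}" unfolding N'_def by simp
      have s2: "\<forall>k\<in>N'. absv (u j0 k) \<le> 1" using ent[OF j0] N'N by blast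
      show ?thesis unfolding \<Phi>_def by (rule cols_inv[OF finN i0(1) t(1) s1 s2])
    qed
    have Phim': "\<Phi> \<in> PiM N (\<lambda>_. \<mu>) \<rightarrow>\<^sub>M PiM N (\<lambda>_. B)" using Phim meas_P_iff by blast
    have u0: "u'' j i0 = 0" for j unfolding u''_def d_def t_def using t(2) unfolding t_def by simp
    have step1: "distr (PiM N (\<lambda>_. \<mu>)) (PiM J (\<lambda>_. B)) L'' = distr (PiM N (\<lambda>_. \<mu>)) (PiM J (\<lambda>_. B)) G"
    proof -
      have "distr (PiM N (\<lambda>_. \<mu>)) (PiM J (\<lambda>_. B)) L'' = distr (PiM N (\<lambda>_. \<mu>)) (PiM J (\<lambda>_. B)) (G \<circ> \<Phi>)"
      proof (rule distr_cong)
        fix x assume "x \<in> space (PiM N (\<lambda>_. \<mu>))"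
        have a: "(\<Sum>i\<in>N. smul (u j0 i) (x i)) = smul t (x i0) + (\<Sum>k\<in>N'. smul (u j0 k) (x k))"
          unfolding N'_def t_def by (rule sum.remove[OF finN i0(1)])
        have b: "(\<Sum>i\<in>N. smul (u'' j i) (x i)) = (\<Sum>i\<in>N'. smul (u'' j i) (\<Phi> x i))" for j
        proof -
          have "(\<Sum>i\<in>N. smul (u'' j i) (x i)) = smul (u'' j i0) (x i0) + (\<Sum>i\<in>N'. smul (u'' j i) (x i))"
            unfolding N'_def by (rule sum.remove[OF finN i0(1)])
          also have "\<dots> = (\<Sum>i\<in>N'. smul (u'' j i) (x i))" using u0 by simp
          also have "\<dots> = (\<Sum>i\<in>N'. smul (u'' j i) (\<Phi> x i))"
            by (intro sum.cong) (auto simp: \<Phi>_def N'_def)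
          finally show ?thesis .
        qed
        have c: "\<Phi> x i0 = smul t (x i0) + (\<Sum>k\<in>N'. smul (u j0 k) (x k))" unfolding \<Phi>_def using i0(1) by simp
        show "L'' x = (G \<circ> \<Phi>) x"
          unfolding L''_def G_def comp_def
        proof (rule ext)
          fix j show "(\<lambda>j\<in>J. if j = j0 then \<Sum>i\<in>N. smul (u j0 i) (x i) else \<Sum>i\<in>N. smul (u'' j i) (x i)) j =
              (\<lambda>j\<in>J. if j = j0 then \<Phi> x i0 else \<Sum>i\<in>N'. smul (u'' j i) (\<Phi> x i)) j"
            using a b c by simp
        qed
      qed simp_all
      also have "\<dots> = distr (distr (PiM N (\<lambda>_. \<mu>)) (PiM N (\<lambda>_. B)) \<Phi>) (PiM J (\<lambda>_. B)) G"
        by (rule distr_distr[OF Gm Phim', symmetric])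
      also have "\<dots> = distr (PiM N (\<lambda>_. \<mu>)) (PiM J (\<lambda>_. B)) G" using Phi_inv by simp
      finally show ?thesis .
    qed
    have step2: "distr (PiM N (\<lambda>_. \<mu>)) (PiM J (\<lambda>_. B)) G = PiM J (\<lambda>_. \<mu>)"
    proof -
      define ins where "ins = (\<lambda>(y::'e, X::nat \<Rightarrow> 'e). X(i0 := y))"
      define ins' where "ins' = (\<lambda>(y::'e, X::nat \<Rightarrow> 'e). X(j0 := y))"
      define H where "H = (\<lambda>(y::'e, X::nat \<Rightarrow> 'e). ((\<lambda>x. x) y, F X))"
      have NN: "insert i0 N' = N" unfolding N'_def using i0(1) by auto
      have JJ: "insert j0 J' = J" unfolding J'_def using j0 by auto
      have PN: "distr (\<mu> \<Otimes>\<^sub>M PiM N' (\<lambda>_. \<mu>)) (PiM N (\<lambda>_. \<mu>)) ins = PiM N (\<lambda>_. \<mu>)"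
        using distr_pair_PiM_eq_PiM[of N' "\<lambda>_. \<mu>" i0] prob_mu unfolding ins_def NN by simp
      have PJ: "distr (\<mu> \<Otimes>\<^sub>M PiM J' (\<lambda>_. \<mu>)) (PiM J (\<lambda>_. \<mu>)) ins' = PiM J (\<lambda>_. \<mu>)"
        using distr_pair_PiM_eq_PiM[of J' "\<lambda>_. \<mu>" j0] prob_mu unfolding ins'_def JJ by simp
      have insm: "ins \<in> \<mu> \<Otimes>\<^sub>M PiM N' (\<lambda>_. \<mu>) \<rightarrow>\<^sub>M PiM N (\<lambda>_. \<mu>)"
        using ins_meas[of i0 N'] unfolding ins_def NN .
      have insm': "ins' \<in> \<mu> \<Otimes>\<^sub>M PiM J' (\<lambda>_. B) \<rightarrow>\<^sub>M PiM J (\<lambda>_. B)"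
      proof -
        have "ins' \<in> \<mu> \<Otimes>\<^sub>M PiM J' (\<lambda>_. \<mu>) \<rightarrow>\<^sub>M PiM J (\<lambda>_. \<mu>)"
          using ins_meas[of j0 J'] unfolding ins'_def JJ .
        moreover have "sets (\<mu> \<Otimes>\<^sub>M PiM J' (\<lambda>_. \<mu>)) = sets (\<mu> \<Otimes>\<^sub>M PiM J' (\<lambda>_. B))"
          by (intro sets_pair_measure_cong refl sets_P)
        ultimately show ?thesis using measurable_cong_sets[OF _ sets_P] by metis
      qed
      have Fm: "F \<in> PiM N' (\<lambda>_. \<mu>) \<rightarrow>\<^sub>M PiM J' (\<lambda>_. B)"
        unfolding meas_P_iff F_def by measurable
      have Hm: "H \<in> \<mu> \<Otimes>\<^sub>M PiM N' (\<lambda>_. \<mu>) \<rightarrow>\<^sub>M \<mu> \<Otimes>\<^sub>M PiM J' (\<lambda>_. B)"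
      proof -
        have "(\<lambda>p. (fst p, F (snd p))) \<in> \<mu> \<Otimes>\<^sub>M PiM N' (\<lambda>_. \<mu>) \<rightarrow>\<^sub>M \<mu> \<Otimes>\<^sub>M PiM J' (\<lambda>_. B)"
          by (intro measurable_Pair measurable_compose[OF measurable_snd Fm]) simp
        then show ?thesis unfolding H_def by (simp add: case_prod_beta')
      qed
      have Gm': "G \<in> PiM N (\<lambda>_. \<mu>) \<rightarrow>\<^sub>M PiM J (\<lambda>_. B)" using Gm meas_P_iff by blast
      have DH: "distr (\<mu> \<Otimes>\<^sub>M PiM N' (\<lambda>_. \<mu>)) (\<mu> \<Otimes>\<^sub>M PiM J' (\<lambda>_. B)) H = \<mu> \<Otimes>\<^sub>M PiM J' (\<lambda>_. \<mu>)"
      proof -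
        have "distr (\<mu> \<Otimes>\<^sub>M PiM N' (\<lambda>_. \<mu>)) (\<mu> \<Otimes>\<^sub>M PiM J' (\<lambda>_. B)) H =
              distr \<mu> \<mu> (\<lambda>x. x) \<Otimes>\<^sub>M distr (PiM N' (\<lambda>_. \<mu>)) (PiM J' (\<lambda>_. B)) F"
          unfolding H_def
          by (rule pair_measure_distr[symmetric, OF measurable_ident_sets[OF refl] Fm])
             (simp add: IH prob_P prob_space_imp_sigma_finite)
        also have "\<dots> = \<mu> \<Otimes>\<^sub>M PiM J' (\<lambda>_. \<mu>)" using IH by simp
        finally show ?thesis .
      qed
      have "distr (PiM N (\<lambda>_. \<mu>)) (PiM J (\<lambda>_. B)) G
          = distr (distr (\<mu> \<Otimes>\<^sub>M PiM N' (\<lambda>_. \<mu>)) (PiM N (\<lambda>_. \<mu>)) ins) (PiM J (\<lambda>_. B)) G"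
        using PN by simp
      also have "\<dots> = distr (\<mu> \<Otimes>\<^sub>M PiM N' (\<lambda>_. \<mu>)) (PiM J (\<lambda>_. B)) (G \<circ> ins)"
        by (rule distr_distr[OF Gm' insm])
      also have "\<dots> = distr (\<mu> \<Otimes>\<^sub>M PiM N' (\<lambda>_. \<mu>)) (PiM J (\<lambda>_. B)) (ins' \<circ> H)"
      proof (rule distr_cong)
        fix p assume "p \<in> space (\<mu> \<Otimes>\<^sub>M PiM N' (\<lambda>_. \<mu>))"
        obtain y X where p: "p = (y, X)" by (cases p)
        show "(G \<circ> ins) p = (ins' \<circ> H) p"
          unfolding p comp_def ins_def ins'_def H_def G_def F_def
        proof (rule ext)
          fix j
          show "(\<lambda>j\<in>J. if j = j0 then (case (y, X) of (y, X) \<Rightarrow> X(i0 := y)) i0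
                else \<Sum>i\<in>N'. smul (u'' j i) ((case (y, X) of (y, X) \<Rightarrow> X(i0 := y)) i)) j =
            (case case (y, X) of (y, X) \<Rightarrow> (y, \<lambda>j\<in>J'. \<Sum>i\<in>N'. smul (u'' j i) (X i)) of (y, X) \<Rightarrow> X(j0 := y)) j"
          proof -
            have s: "(\<Sum>i\<in>N'. smul (u'' j i) ((X(i0 := y)) i)) = (\<Sum>i\<in>N'. smul (u'' j i) (X i))"
              by (intro sum.cong) (auto simp: N'_def)
            show ?thesis using s j0 unfolding J'_def by auto
          qed
        qed
      qed simp_all
      also have "\<dots> = distr (distr (\<mu> \<Otimes>\<^sub>M PiM N' (\<lambda>_. \<mu>)) (\<mu> \<Otimes>\<^sub>M PiM J' (\<lambda>_. B)) H) (PiM J (\<lambda>_. B)) ins'"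
        by (rule distr_distr[OF insm' Hm, symmetric])
      also have "\<dots> = distr (\<mu> \<Otimes>\<^sub>M PiM J' (\<lambda>_. \<mu>)) (PiM J (\<lambda>_. B)) ins'" using DH by simp
      also have "\<dots> = distr (\<mu> \<Otimes>\<^sub>M PiM J' (\<lambda>_. \<mu>)) (PiM J (\<lambda>_. \<mu>)) ins'"
        by (rule distr_target_cong) (rule sets_P[symmetric])
      also have "\<dots> = PiM J (\<lambda>_. \<mu>)" by (rule PJ)
      finally show ?thesis .
    qed
    have step3: "distr (PiM N (\<lambda>_. \<mu>)) (PiM J (\<lambda>_. B)) L = distr (distr (PiM N (\<lambda>_. \<mu>)) (PiM J (\<lambda>_. B)) L'') (PiM J (\<lambda>_. B)) V"
    proof -
      have Lm3: "L'' \<in> PiM N (\<lambda>_. \<mu>) \<rightarrow>\<^sub>M PiM J (\<lambda>_. B)" using Lm'' meas_P_iff by blast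
      have "distr (PiM N (\<lambda>_. \<mu>)) (PiM J (\<lambda>_. B)) L = distr (PiM N (\<lambda>_. \<mu>)) (PiM J (\<lambda>_. B)) (V \<circ> L'')"
      proof (rule distr_cong)
        fix x assume "x \<in> space (PiM N (\<lambda>_. \<mu>))"
        have e: "(\<Sum>i\<in>N. smul (u'' j i) (x i)) + smul (d j) (\<Sum>i\<in>N. smul (u j0 i) (x i)) = (\<Sum>i\<in>N. smul (u j i) (x i))" for j
          unfolding u''_def by (rule lin_comb)
        show "L x = (V \<circ> L'') x"
          unfolding L_def V_def L''_def comp_def
        proof (rule ext)
          fix j show "(\<lambda>j\<in>J. \<Sum>i\<in>N. smul (u j i) (x i)) j =
            (\<lambda>j\<in>J. if j \<in> J' then (\<lambda>j\<in>J. if j = j0 then \<Sum>i\<in>N. smul (u j0 i) (x i) else \<Sum>i\<in>N. smul (u'' j i) (x i)) j +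
               smul (d j) ((\<lambda>j\<in>J. if j = j0 then \<Sum>i\<in>N. smul (u j0 i) (x i) else \<Sum>i\<in>N. smul (u'' j i) (x i)) j0)
             else (\<lambda>j\<in>J. if j = j0 then \<Sum>i\<in>N. smul (u j0 i) (x i) else \<Sum>i\<in>N. smul (u'' j i) (x i)) j) j"
            using e[of j] j0 unfolding J'_def by auto
        qed
      qed simp_all
      also have "\<dots> = distr (distr (PiM N (\<lambda>_. \<mu>)) (PiM J (\<lambda>_. B)) L'') (PiM J (\<lambda>_. B)) V"
        by (rule distr_distr[OF Vm Lm3, symmetric])
      finally show ?thesis .
    qed
    have "distr (PiM J (\<lambda>_. \<mu>)) (PiM J (\<lambda>_. B)) V = PiM J (\<lambda>_. \<mu>)"
    proof -
      have s1: "J' \<subseteq> J - {j0}" unfolding J'_def by simp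
      have s2: "\<forall>j\<in>J'. absv (d j) \<le> 1" using dle J'J by blast
      show ?thesis unfolding V_def by (rule rows_inv[OF finJ j0 s1 s2])
    qed
    then show ?thesis using step1 step2 step3 unfolding L_def by simp
  qed
qed

end



context kspace begin

lemma K_gaussian_iff: "K_gaussian absv smul nrm M X \<longleftrightarrow> X \<in> M \<rightarrow>\<^sub>M B \<and> gauss_law (distr M B X)"
  unfolding K_gaussian_def gauss_law_def Let_def by simp

lemma gauss_scale:
  assumes pm: "prob_space \<mu>" and sm: "sets \<mu> = sets B" and g: "gauss_law \<mu>"
  shows "gauss_law (distr \<mu> B (smul c))"
  unfolding gauss_law_def
proof (intro allI impI)
  fix a11 a12 a21 a22 assume op: "orthonormal_pair absv a11 a12 a21 a22"
  define \<nu> where "\<nu> = distr \<mu> B (smul c)"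
  define S where "S = (\<lambda>(x, y). (smul c x, smul c y))"
  define T where "T = (\<lambda>(x, y). (smul a11 x + smul a12 y, smul a21 x + smul a22 y))"
  have smm: "smul c \<in> \<mu> \<rightarrow>\<^sub>M B" using measurable_smul_c measurable_cong_sets[OF sm refl] by blast
  have pn: "prob_space \<nu>" unfolding \<nu>_def by (rule prob_space.prob_space_distr[OF pm smm])
  have mumu: "sets (\<mu> \<Otimes>\<^sub>M \<mu>) = sets (B \<Otimes>\<^sub>M B)" by (intro sets_pair_measure_cong sm)
  have Sm: "S \<in> B \<Otimes>\<^sub>M B \<rightarrow>\<^sub>M B \<Otimes>\<^sub>M B" unfolding S_def by measurable
  have Sm': "S \<in> \<mu> \<Otimes>\<^sub>M \<mu> \<rightarrow>\<^sub>M B \<Otimes>\<^sub>M B" using Sm measurable_cong_sets[OF mumu refl] by blast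
  have Tm: "T \<in> B \<Otimes>\<^sub>M B \<rightarrow>\<^sub>M B \<Otimes>\<^sub>M B" unfolding T_def by (rule pair_map_meas)
  have Tm': "T \<in> \<mu> \<Otimes>\<^sub>M \<mu> \<rightarrow>\<^sub>M B \<Otimes>\<^sub>M B" using Tm measurable_cong_sets[OF mumu refl] by blast
  have nn: "\<nu> \<Otimes>\<^sub>M \<nu> = distr (\<mu> \<Otimes>\<^sub>M \<mu>) (B \<Otimes>\<^sub>M B) S"
    unfolding \<nu>_def S_def
    by (rule pair_measure_distr[OF smm smm]) (use prob_space_imp_sigma_finite[OF pn] in \<open>unfold \<nu>_def\<close>)
  have gT: "distr (\<mu> \<Otimes>\<^sub>M \<mu>) (B \<Otimes>\<^sub>M B) T = \<mu> \<Otimes>\<^sub>M \<mu>" using g op unfolding gauss_law_def T_def by blast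
  have comm: "T (S p) = S (T p)" for p
  proof -
    obtain x y where p: "p = (x, y)" by (cases p)
    have e: "smul a (smul c u) + smul b (smul c v) = smul c (smul a u + smul b v)" for a b u v
      by (metis scale_left_commute scale_right_distrib)
    show ?thesis unfolding p S_def T_def using e by simp
  qed
  have "distr (\<nu> \<Otimes>\<^sub>M \<nu>) (B \<Otimes>\<^sub>M B) T = distr (\<mu> \<Otimes>\<^sub>M \<mu>) (B \<Otimes>\<^sub>M B) (T \<circ> S)"
    unfolding nn by (rule distr_distr[OF Tm Sm'])
  also have "\<dots> = distr (\<mu> \<Otimes>\<^sub>M \<mu>) (B \<Otimes>\<^sub>M B) (S \<circ> T)"
    by (intro distr_cong) (auto simp: comm)
  also have "\<dots> = distr (distr (\<mu> \<Otimes>\<^sub>M \<mu>) (B \<Otimes>\<^sub>M B) T) (B \<Otimes>\<^sub>M B) S"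
    by (rule distr_distr[OF Sm Tm', symmetric])
  also have "\<dots> = distr (\<mu> \<Otimes>\<^sub>M \<mu>) (B \<Otimes>\<^sub>M B) S" using gT by simp
  also have "\<dots> = \<nu> \<Otimes>\<^sub>M \<nu>" using nn by simp
  finally show "distr (distr \<mu> B (smul c) \<Otimes>\<^sub>M distr \<mu> B (smul c)) (B \<Otimes>\<^sub>M B)
        (\<lambda>(x, y). (smul a11 x + smul a12 y, smul a21 x + smul a22 y)) = distr \<mu> B (smul c) \<Otimes>\<^sub>M distr \<mu> B (smul c)"
    unfolding \<nu>_def T_def .
qed

lemma gauss_return: "gauss_law (return B 0)"
  unfolding gauss_law_def
proof (intro allI impI)
  fix a11 a12 a21 a22
  have rr: "return B 0 \<Otimes>\<^sub>M return B 0 = return (B \<Otimes>\<^sub>M B) (0, 0)"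
  proof (rule pair_measure_eqI)
    have z: "0 \<in> space B" by simp
    show "sigma_finite_measure (return B 0)" "sigma_finite_measure (return B 0)"
      using prob_space_imp_sigma_finite[OF prob_space_return[OF z]] by auto
    have "sets (return B 0 \<Otimes>\<^sub>M return B 0) = sets (B \<Otimes>\<^sub>M B)"
      by (rule sets_pair_measure_cong) (rule sets_return)+
    then show "sets (return B 0 \<Otimes>\<^sub>M return B 0) = sets (return (B \<Otimes>\<^sub>M B) (0, 0))"
      by (simp only: sets_return)
    fix A C assume A: "A \<in> sets (return B 0)" and C: "C \<in> sets (return B 0)"
    have A': "A \<in> sets B" and C': "C \<in> sets B" using A C by (simp_all only: sets_return)
    have AC: "A \<times> C \<in> sets (B \<Otimes>\<^sub>M B)" by (rule pair_measureI[OF A' C'])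
    have "emeasure (return B 0) A * emeasure (return B 0) C = indicator A 0 * indicator C 0"
      using emeasure_return[OF A'] emeasure_return[OF C'] by simp
    also have "\<dots> = indicator (A \<times> C) (0, 0)" by (simp add: indicator_times)
    also have "\<dots> = emeasure (return (B \<Otimes>\<^sub>M B) (0, 0)) (A \<times> C)"
      using emeasure_return[OF AC] by simp
    finally show "emeasure (return B 0) A * emeasure (return B 0) C = emeasure (return (B \<Otimes>\<^sub>M B) (0, 0)) (A \<times> C)" .
  qed
  show "distr (return B 0 \<Otimes>\<^sub>M return B 0) (B \<Otimes>\<^sub>M B) (\<lambda>(x, y). (smul a11 x + smul a12 y, smul a21 x + smul a22 y)) =
        return B 0 \<Otimes>\<^sub>M return B 0"
  proof -
    have "distr (return (B \<Otimes>\<^sub>M B) (0, 0)) (B \<Otimes>\<^sub>M B) (\<lambda>(x, y). (smul a11 x + smul a12 y, smul a21 x + smul a22 y))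
       = return (B \<Otimes>\<^sub>M B) ((\<lambda>(x, y). (smul a11 x + smul a12 y, smul a21 x + smul a22 y)) (0, 0))"
      by (rule distr_return[OF pair_map_meas]) (simp add: space_pair_measure)
    also have "(\<lambda>(x, y). (smul a11 x + smul a12 y, smul a21 x + smul a22 y)) (0, 0) = (0, 0)" by simp
    finally show ?thesis unfolding rr .
  qed
qed

end

context gctx begin

interpretation MU: prob_space \<mu> by (rule prob_mu)

interpretation PS: product_prob_space "\<lambda>_::nat. \<mu>" "UNIV :: nat set"
  by (rule product_prob_spaceI) (rule prob_mu)

lemma distr_PiM_empty':
  assumes pM: "prob_space M" and fm: "f \<in> M \<rightarrow>\<^sub>M PiM {} (\<lambda>_::nat. B)"
  shows "distr M (PiM {} (\<lambda>_. B)) f = PiM {} (\<lambda>_. \<mu>)"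
proof (rule PS.PiM_eqI)
  show "finite {}" by simp
  show "sets (distr M (PiM {} (\<lambda>_. B)) f) = sets (PiM {} (\<lambda>_. \<mu>))" by (simp add: sets_P)
  fix A :: "nat \<Rightarrow> 'e set"
  have Ae: "Pi\<^sub>E {} A \<in> sets (PiM {} (\<lambda>_. B))" by (simp add: sets_PiM_empty)
  have pre: "f -` Pi\<^sub>E {} A \<inter> space M = space M"
    using measurable_space[OF fm] by (auto simp: space_PiM)
  have "emeasure (distr M (PiM {} (\<lambda>_. B)) f) (Pi\<^sub>E {} A) = emeasure M (space M)"
    using emeasure_distr[OF fm Ae] pre by simp
  also have "\<dots> = 1" using pM prob_space.emeasure_space_1 by blast
  finally show "emeasure (distr M (PiM {} (\<lambda>_. B)) f) (Pi\<^sub>E {} A) = (\<Prod>i\<in>{}. emeasure \<mu> (A i))" by simp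
qed

lemma prod_scale:
  fixes I :: "nat set"
  assumes fin: "finite I" and ne: "I \<noteq> {}"
  shows "distr (PiM I (\<lambda>_. \<mu>)) (PiM I (\<lambda>_. B)) (\<lambda>z. \<lambda>j\<in>I. smul (c j) (z j)) = PiM I (\<lambda>j. distr \<mu> B (smul (c j)))"
proof -
  interpret Pm: prob_space "PiM I (\<lambda>_. \<mu>)" by (rule prob_P)
  have comp: "distr (PiM I (\<lambda>_. \<mu>)) B (\<lambda>z. z j) = \<mu>" if "j \<in> I" for j
  proof -
    have "distr (PiM I (\<lambda>_. \<mu>)) B (\<lambda>z. z j) = distr (PiM I (\<lambda>_. \<mu>)) \<mu> (\<lambda>z. z j)"
      by (rule distr_target_cong) (simp add: sets_mu)
    also have "\<dots> = \<mu>" by (rule distr_PiM_component) (use that prob_mu in auto)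
    finally show ?thesis .
  qed
  have rv: "(\<lambda>z. z j) \<in> PiM I (\<lambda>_. \<mu>) \<rightarrow>\<^sub>M B" if "j \<in> I" for j
  proof -
    have "(\<lambda>z. z j) \<in> PiM I (\<lambda>_. B) \<rightarrow>\<^sub>M B" using that by simp
    then show ?thesis by (simp only: meas_P_iff)
  qed
  have "Pm.indep_vars (\<lambda>_. B) (\<lambda>j z. z j) I"
  proof (subst Pm.indep_vars_iff_distr_eq_PiM'[OF ne rv])
    show "distr (PiM I (\<lambda>_. \<mu>)) (PiM I (\<lambda>_. B)) (\<lambda>x. \<lambda>i\<in>I. x i) = PiM I (\<lambda>i. distr (PiM I (\<lambda>_. \<mu>)) B (\<lambda>z. z i))"
    proof -
      have "distr (PiM I (\<lambda>_. \<mu>)) (PiM I (\<lambda>_. B)) (\<lambda>x. \<lambda>i\<in>I. x i) = PiM I (\<lambda>_. \<mu>)"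
        by (rule id_inv) (auto simp: space_PiM PiE_restrict)
      also have "\<dots> = PiM I (\<lambda>i. distr (PiM I (\<lambda>_. \<mu>)) B (\<lambda>z. z i))"
        by (intro PiM_cong refl) (simp add: comp)
      finally show ?thesis .
    qed
  qed
  then have ind: "Pm.indep_vars (\<lambda>_. B) (\<lambda>j z. smul (c j) (z j)) I"
    by (rule Pm.indep_vars_compose2[where Y = "\<lambda>j. smul (c j)"]) (rule measurable_smul_c)
  have rv2: "(\<lambda>z. smul (c j) (z j)) \<in> PiM I (\<lambda>_. \<mu>) \<rightarrow>\<^sub>M B" if "j \<in> I" for j
    using measurable_compose[OF rv[OF that] measurable_smul_c] by simp
  have "distr (PiM I (\<lambda>_. \<mu>)) (PiM I (\<lambda>_. B)) (\<lambda>z. \<lambda>j\<in>I. smul (c j) (z j))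
      = PiM I (\<lambda>j. distr (PiM I (\<lambda>_. \<mu>)) B (\<lambda>z. smul (c j) (z j)))"
    using Pm.indep_vars_iff_distr_eq_PiM'[OF ne rv2] ind by simp
  also have "\<dots> = PiM I (\<lambda>j. distr \<mu> B (smul (c j)))"
  proof (intro PiM_cong refl)
    fix j assume j: "j \<in> I"
    have "distr (PiM I (\<lambda>_. \<mu>)) B (\<lambda>z. smul (c j) (z j)) = distr (PiM I (\<lambda>_. \<mu>)) B (smul (c j) \<circ> (\<lambda>z. z j))"
      by (simp add: comp_def)
    also have "\<dots> = distr (distr (PiM I (\<lambda>_. \<mu>)) B (\<lambda>z. z j)) B (smul (c j))"
      by (rule distr_distr[OF measurable_smul_c rv[OF j], symmetric])
    also have "\<dots> = distr \<mu> B (smul (c j))" using comp[OF j] by simp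
    finally show "distr (PiM I (\<lambda>_. \<mu>)) B (\<lambda>z. smul (c j) (z j)) = distr \<mu> B (smul (c j))" .
  qed
  finally show ?thesis .
qed

end



context nabs begin

lemma ext_orth:
  fixes \<alpha> :: "nat \<Rightarrow> nat \<Rightarrow> 'k" and c :: "nat \<Rightarrow> 'k"
  assumes og: "orthogonal_family absv n \<alpha> m"
    and cabs: "\<And>j. absv (c j) = mx {..<n} (\<lambda>i. absv (\<alpha> j i))"
    and cz: "\<And>j i. c j = 0 \<Longrightarrow> i < n \<Longrightarrow> \<alpha> j i = 0"
  shows "orthoI absv {..<n+m} {..<m} (\<lambda>j i. if i < n then \<alpha> j i / c j else if i = n + j \<and> c j = 0 then 1 else 0)"
  unfolding orthoI_def
proof
  fix b :: "nat \<Rightarrow> 'k"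
  define \<beta> where "\<beta> = (\<lambda>j i. if i < n then \<alpha> j i / c j else if i = n + j \<and> c j = 0 then (1::'k) else 0)"
  define v where "v = (\<lambda>i. \<Sum>j<m. b j * \<beta> j i)"
  have F1: "v i = (\<Sum>j<m. (b j / c j) * \<alpha> j i)" if "i < n" for i
    unfolding v_def \<beta>_def using that by (intro sum.cong) (auto simp: divide_inverse ac_simps)
  have F2: "mx {..<n} (\<lambda>i. absv (\<Sum>j<m. (b j / c j) * \<alpha> j i)) = mx {..<m} (\<lambda>j. absv (b j / c j) * mx {..<n} (\<lambda>i. absv (\<alpha> j i)))"
  proof -
    have "\<forall>\<beta>. mx {..<n} (\<lambda>i. absv (\<Sum>j<m. \<beta> j * \<alpha> j i)) = mx {..<m} (\<lambda>j. absv (\<beta> j) * mx {..<n} (\<lambda>i. absv (\<alpha> j i)))"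
      using og unfolding orthogonal_family_mx .
    from spec[OF this, of "\<lambda>j. b j / c j"] show ?thesis by simp
  qed
  have F2': "absv (b j / c j) * mx {..<n} (\<lambda>i. absv (\<alpha> j i)) = (if c j = 0 then 0 else absv (b j))" for j
    unfolding cabs[symmetric] by (cases "c j = 0") simp_all
  have F3: "v (n + k) = (if c k = 0 then b k else 0)" if "k < m" for k
  proof -
    have "v (n + k) = (\<Sum>j<m. if j = k then (if c k = 0 then b k else 0) else 0)"
      unfolding v_def \<beta>_def by (intro sum.cong) auto
    also have "\<dots> = (if c k = 0 then b k else 0)" using that by (simp add: sum.delta)
    finally show ?thesis .
  qed
  have "mx {..<n + m} (\<lambda>i. absv (v i)) = mx {..<m} (\<lambda>j. absv (b j))"
  proof (rule mx_eqI)
    fix r :: real assume r: "0 \<le> r"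
    have A: "(\<forall>i<n. absv (v i) \<le> r) \<longleftrightarrow> (\<forall>j<m. c j \<noteq> 0 \<longrightarrow> absv (b j) \<le> r)"
    proof -
      have "(\<forall>i<n. absv (v i) \<le> r) \<longleftrightarrow> mx {..<n} (\<lambda>i. absv (v i)) \<le> r"
        using r by (auto simp: mx_le_iff)
      also have "mx {..<n} (\<lambda>i. absv (v i)) = mx {..<n} (\<lambda>i. absv (\<Sum>j<m. (b j / c j) * \<alpha> j i))"
        by (rule mx_eqI) (auto simp: F1)
      also have "\<dots> = mx {..<m} (\<lambda>j. if c j = 0 then 0 else absv (b j))" unfolding F2 F2' ..
      also have "\<dots> \<le> r \<longleftrightarrow> (\<forall>j<m. c j \<noteq> 0 \<longrightarrow> absv (b j) \<le> r)"
        using r by (auto simp: mx_le_iff)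
      finally show ?thesis .
    qed
    have C: "(\<forall>k<m. absv (v (n + k)) \<le> r) \<longleftrightarrow> (\<forall>k<m. c k = 0 \<longrightarrow> absv (b k) \<le> r)"
      using r by (auto simp: F3)
    have S: "(\<forall>i\<in>{..<n + m}. absv (v i) \<le> r) \<longleftrightarrow> (\<forall>i<n. absv (v i) \<le> r) \<and> (\<forall>k<m. absv (v (n + k)) \<le> r)"
    proof
      assume h: "\<forall>i\<in>{..<n + m}. absv (v i) \<le> r"
      show "(\<forall>i<n. absv (v i) \<le> r) \<and> (\<forall>k<m. absv (v (n + k)) \<le> r)" using h by auto
    next
      assume h: "(\<forall>i<n. absv (v i) \<le> r) \<and> (\<forall>k<m. absv (v (n + k)) \<le> r)"
      show "\<forall>i\<in>{..<n + m}. absv (v i) \<le> r"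
      proof
        fix i assume i: "i \<in> {..<n + m}"
        show "absv (v i) \<le> r"
        proof (cases "i < n")
          case True then show ?thesis using h by auto
        next
          case False
          then obtain k where "i = n + k" "k < m" using i by (metis add_diff_inverse_nat lessThan_iff nat_add_left_cancel_less)
          then show ?thesis using h by auto
        qed
      qed
    qed
    show "(\<forall>a\<in>{..<n + m}. absv (v a) \<le> r) \<longleftrightarrow> (\<forall>b'\<in>{..<m}. absv (b b') \<le> r)"
      unfolding S A C by auto
  qed auto
  then show "mx {..<n + m} (\<lambda>i. absv (\<Sum>j<m. b j * (if i < n then \<alpha> j i / c j else if i = n + j \<and> c j = 0 then 1 else 0))) = mx {..<m} (\<lambda>j. absv (b j))"
    unfolding v_def \<beta>_def .
qed

end




lemma choose_c:
  fixes absv :: "'k::field \<Rightarrow> real" and \<alpha> :: "nat \<Rightarrow> nat \<Rightarrow> 'k"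
  assumes na: "nabs absv"
  shows "\<exists>c. (\<forall>j. absv (c j) = mx {..<n} (\<lambda>i. absv (\<alpha> j i))) \<and> (\<forall>j i. c j = 0 \<longrightarrow> i < n \<longrightarrow> \<alpha> j i = 0)"
proof -
  interpret nabs absv by (rule na)
  have "\<exists>cj. absv cj = mx {..<n} (\<lambda>i. absv (\<alpha> j i)) \<and> (\<forall>i. cj = 0 \<longrightarrow> i < n \<longrightarrow> \<alpha> j i = 0)" for j
  proof (cases "mx {..<n} (\<lambda>i. absv (\<alpha> j i)) = 0")
    case True
    have "\<alpha> j i = 0" if "i < n" for i
    proof -
      have "absv (\<alpha> j i) \<le> 0" using mx_ge[of "{..<n}" i "\<lambda>i. absv (\<alpha> j i)"] that True by simp
      then show ?thesis using a_nonneg[of "\<alpha> j i"] by simp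
    qed
    then show ?thesis using True by (intro exI[of _ 0]) simp
  next
    case False
    then have "0 < mx {..<n} (\<lambda>i. absv (\<alpha> j i))" using mx_nonneg[of "{..<n}"] by (simp add: less_le)
    then obtain i0 where "i0 \<in> {..<n}" "absv (\<alpha> j i0) = mx {..<n} (\<lambda>i. absv (\<alpha> j i))"
      using mx_attained[of "{..<n}"] by blast
    then show ?thesis using False by (intro exI[of _ "\<alpha> j i0"]) auto
  qed
  then show ?thesis by metis
qed

theorem theorem4p11:
  fixes absv :: "'k::field \<Rightarrow> real"
    and smul :: "'k \<Rightarrow> 'e::ab_group_add \<Rightarrow> 'e"
    and nrm :: "'e \<Rightarrow> real"
    and M :: "'a measure"
    and X :: "nat \<Rightarrow> 'a \<Rightarrow> 'e"
    and n m :: nat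
    and \<alpha> :: "nat \<Rightarrow> nat \<Rightarrow> 'k"
  assumes "local_field absv"
    and "separable_banach_K absv smul nrm"
    and "prob_space M"
    and "prob_space.indep_vars M (\<lambda>_. borelE nrm) X {..<n}"
    and "\<forall>i<n. \<forall>k<n. distr M (borelE nrm) (X i) = distr M (borelE nrm) (X k)"
    and "\<forall>i<n. K_gaussian absv smul nrm M (X i)"
    and "orthogonal_family absv n \<alpha> m"
  shows "prob_space.indep_vars M (\<lambda>_. borelE nrm) (\<lambda>j \<omega>. \<Sum>i<n. smul (\<alpha> j i) (X i \<omega>)) {..<m} \<and>
         (\<forall>j<m. K_gaussian absv smul nrm M (\<lambda>\<omega>. \<Sum>i<n. smul (\<alpha> j i) (X i \<omega>)))"
proof -
  note lf = assms(1) and sb = assms(2) and pM = assms(3) and ind = assms(4) and idd = assms(5)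
    and gX = assms(6) and og = assms(7)
  have na: "nabs absv" using lf unfolding local_field_def by (simp add: nabs_def)
  have ns: "normed_space_K absv smul nrm" using sb unfolding separable_banach_K_def by blast
  obtain D where Dc: "countable D" and Dd: "\<forall>x. \<forall>e>0. \<exists>d\<in>D. nrm (x - d) < e"
    using sb unfolding separable_banach_K_def by blast
  interpret K: kspace absv smul nrm D
    by (rule kspace.intro[OF na]) (rule kspace_axioms.intro[OF ns Dc Dd])
  interpret M: prob_space M by (rule pM)
  define B where "B = borelE nrm"
  have Xm: "X i \<in> M \<rightarrow>\<^sub>M B" if "i < n" for i using gX that unfolding K.K_gaussian_iff B_def by blast
  define \<mu> where "\<mu> = (if n = 0 then return B 0 else distr M B (X 0))"
  have gc: "gctx absv smul nrm D \<mu>"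
  proof (rule gctx.intro[OF K.kspace_axioms], rule gctx_axioms.intro)
    show "prob_space \<mu>"
      unfolding \<mu>_def using Xm by (auto intro!: prob_space_return M.prob_space_distr simp: B_def)
    show "sets \<mu> = sets (borelE nrm)" unfolding \<mu>_def B_def by simp
    show "K.gauss_law \<mu>"
    proof (cases "n = 0")
      case True then show ?thesis unfolding \<mu>_def B_def using K.gauss_return by simp
    next
      case False
      then have "K_gaussian absv smul nrm M (X 0)" using gX by simp
      then show ?thesis unfolding \<mu>_def B_def K.K_gaussian_iff using False by simp
    qed
  qed
  interpret G: gctx absv smul nrm D \<mu> by (rule gc)
  let ?B = "borelE nrm"
  have Xm': "X i \<in> M \<rightarrow>\<^sub>M ?B" if "i \<in> {..<n}" for i using Xm that unfolding B_def by simp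
  have Xvm: "(\<lambda>\<omega>. \<lambda>i\<in>{..<n}. X i \<omega>) \<in> M \<rightarrow>\<^sub>M PiM {..<n} (\<lambda>_. ?B)"
    by (rule measurable_restrict) (rule Xm')
  have LX: "distr M (PiM {..<n} (\<lambda>_. ?B)) (\<lambda>\<omega>. \<lambda>i\<in>{..<n}. X i \<omega>) = PiM {..<n} (\<lambda>_. \<mu>)"
  proof (cases "n = 0")
    case True
    have fm: "(\<lambda>\<omega>. \<lambda>i\<in>{}. X i \<omega>) \<in> M \<rightarrow>\<^sub>M PiM {} (\<lambda>_::nat. ?B)"
      by (rule measurable_restrict) simp
    show ?thesis using G.distr_PiM_empty'[OF pM fm] True by simp
  next
    case False
    have ne: "{..<n} \<noteq> {}" using False by auto
    have "distr M (PiM {..<n} (\<lambda>_. ?B)) (\<lambda>\<omega>. \<lambda>i\<in>{..<n}. X i \<omega>) = PiM {..<n} (\<lambda>i. distr M ?B (X i))"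
      using M.indep_vars_iff_distr_eq_PiM'[OF ne Xm'] ind by (rule iffD1)
    also have "\<dots> = PiM {..<n} (\<lambda>_. \<mu>)"
    proof (intro PiM_cong refl)
      fix i assume "i \<in> {..<n}"
      then have i: "i < n" by simp
      have "0 < n" using False by simp
      then have "distr M ?B (X i) = distr M ?B (X 0)" using idd i by blast
      then show "distr M ?B (X i) = \<mu>" using False unfolding \<mu>_def B_def by simp
    qed
    finally show ?thesis .
  qed
  define Y where "Y = (\<lambda>j \<omega>. \<Sum>i<n. smul (\<alpha> j i) (X i \<omega>))"
  have Ym: "Y j \<in> M \<rightarrow>\<^sub>M ?B" for j
    unfolding Y_def by (intro K.meas_sum K.meas_smul Xm') auto
  show ?thesis
  proof (cases "m = 0")
    case True
    have "M.indep_vars (\<lambda>_. ?B) Y {}" by (simp add: M.indep_vars_def M.indep_sets_def)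
    then show ?thesis using True unfolding Y_def by simp
  next
    case False
    have ne: "{..<m} \<noteq> {}" using False by auto
    obtain c where cabs: "\<And>j. absv (c j) = mx {..<n} (\<lambda>i. absv (\<alpha> j i))"
      and cz: "\<And>j i. c j = 0 \<Longrightarrow> i < n \<Longrightarrow> \<alpha> j i = 0"
      using choose_c[OF na, of n \<alpha>] by blast
    define \<beta> where "\<beta> = (\<lambda>j i. if i < n then \<alpha> j i / c j else if i = n + j \<and> c j = 0 then (1::'k) else 0)"
    have orth: "orthoI absv {..<n+m} {..<m} \<beta>"
      unfolding \<beta>_def by (rule K.ext_orth[OF og cabs cz])
    define P where "P = PiM {..<n+m} (\<lambda>_::nat. \<mu>)"
    define Z where "Z = (\<lambda>x. \<lambda>j\<in>{..<m}. \<Sum>i\<in>{..<n+m}. smul (\<beta> j i) (x i))"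
    have core: "distr P (PiM {..<m} (\<lambda>_. ?B)) Z = PiM {..<m} (\<lambda>_. \<mu>)"
      unfolding P_def Z_def by (rule G.core) (simp_all add: orth)
    have key: "smul (c j) (\<Sum>i\<in>{..<n+m}. smul (\<beta> j i) (x i)) = (\<Sum>i<n. smul (\<alpha> j i) (x i))" for j x
    proof -
      have cb: "c j * \<beta> j i = (if i < n then \<alpha> j i else 0)" for i
      proof (cases "i < n")
        case True
        then show ?thesis unfolding \<beta>_def using cz[of j i] by (cases "c j = 0") simp_all
      next
        case False
        then show ?thesis unfolding \<beta>_def by auto
      qed
      have "smul (c j) (\<Sum>i\<in>{..<n+m}. smul (\<beta> j i) (x i)) = (\<Sum>i\<in>{..<n+m}. smul (c j * \<beta> j i) (x i))"
        by (simp add: K.scale_sum_right)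
      also have "\<dots> = (\<Sum>i\<in>{..<n+m}. smul (if i < n then \<alpha> j i else 0) (x i))"
        by (simp only: cb)
      also have "\<dots> = (\<Sum>i\<in>{..<n}. smul (if i < n then \<alpha> j i else 0) (x i))"
        by (rule sum.mono_neutral_right) auto
      also have "\<dots> = (\<Sum>i<n. smul (\<alpha> j i) (x i))" by (intro sum.cong) auto
      finally show ?thesis .
    qed
    interpret PSm: product_prob_space "\<lambda>_::nat. \<mu>" "{..<n+m}"
      by (rule product_prob_spaceI) (rule G.prob_mu)
    have PR: "distr P (PiM {..<n} (\<lambda>_. \<mu>)) (\<lambda>x. restrict x {..<n}) = PiM {..<n} (\<lambda>_. \<mu>)"
      unfolding P_def by (rule PSm.distr_PiM_restrict_finite) auto
    have Rm: "(\<lambda>x. restrict x {..<n}) \<in> P \<rightarrow>\<^sub>M PiM {..<n} (\<lambda>_. \<mu>)"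
      unfolding P_def by (rule measurable_restrict_subset) auto
    define Hy where "Hy = (\<lambda>y. \<lambda>j\<in>{..<m}. \<Sum>i<n. smul (\<alpha> j i) (y i))"
    have Hym: "Hy \<in> PiM {..<n} (\<lambda>_. ?B) \<rightarrow>\<^sub>M PiM {..<m} (\<lambda>_. ?B)"
      unfolding Hy_def by measurable
    have Hym': "Hy \<in> PiM {..<n} (\<lambda>_. \<mu>) \<rightarrow>\<^sub>M PiM {..<m} (\<lambda>_. ?B)"
      using Hym G.meas_P_iff by blast
    define Sc where "Sc = (\<lambda>z. \<lambda>j\<in>{..<m}. smul (c j) (z j))"
    have Scm: "Sc \<in> PiM {..<m} (\<lambda>_. ?B) \<rightarrow>\<^sub>M PiM {..<m} (\<lambda>_. ?B)"
      unfolding Sc_def by measurable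
    have Zm: "Z \<in> P \<rightarrow>\<^sub>M PiM {..<m} (\<lambda>_. ?B)"
    proof -
      have "Z \<in> PiM {..<n+m} (\<lambda>_. ?B) \<rightarrow>\<^sub>M PiM {..<m} (\<lambda>_. ?B)" unfolding Z_def by measurable
      then show ?thesis unfolding P_def using G.meas_P_iff by blast
    qed
    define \<nu> where "\<nu> = (\<lambda>j. distr \<mu> ?B (smul (c j)))"
    have joint: "distr M (PiM {..<m} (\<lambda>_. ?B)) (\<lambda>\<omega>. \<lambda>j\<in>{..<m}. Y j \<omega>) = PiM {..<m} \<nu>"
    proof -
      have "distr M (PiM {..<m} (\<lambda>_. ?B)) (\<lambda>\<omega>. \<lambda>j\<in>{..<m}. Y j \<omega>)
          = distr M (PiM {..<m} (\<lambda>_. ?B)) (Hy \<circ> (\<lambda>\<omega>. \<lambda>i\<in>{..<n}. X i \<omega>))"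
        by (intro distr_cong) (auto simp: Hy_def Y_def fun_eq_iff intro!: sum.cong)
      also have "\<dots> = distr (distr M (PiM {..<n} (\<lambda>_. ?B)) (\<lambda>\<omega>. \<lambda>i\<in>{..<n}. X i \<omega>)) (PiM {..<m} (\<lambda>_. ?B)) Hy"
        by (rule distr_distr[OF Hym Xvm, symmetric])
      also have "\<dots> = distr (distr P (PiM {..<n} (\<lambda>_. \<mu>)) (\<lambda>x. restrict x {..<n})) (PiM {..<m} (\<lambda>_. ?B)) Hy"
        unfolding LX PR ..
      also have "\<dots> = distr P (PiM {..<m} (\<lambda>_. ?B)) (Hy \<circ> (\<lambda>x. restrict x {..<n}))"
        by (rule distr_distr[OF Hym' Rm])
      also have "\<dots> = distr P (PiM {..<m} (\<lambda>_. ?B)) (Sc \<circ> Z)"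
      proof (rule distr_cong)
        fix x assume "x \<in> space P"
        show "(Hy \<circ> (\<lambda>x. restrict x {..<n})) x = (Sc \<circ> Z) x"
          unfolding comp_def Hy_def Sc_def Z_def
        proof (rule ext)
          fix j
          have "(\<Sum>i<n. smul (\<alpha> j i) (restrict x {..<n} i)) = (\<Sum>i<n. smul (\<alpha> j i) (x i))"
            by (intro sum.cong) auto
          then show "(\<lambda>j\<in>{..<m}. \<Sum>i<n. smul (\<alpha> j i) (restrict x {..<n} i)) j =
            (\<lambda>j\<in>{..<m}. smul (c j) ((\<lambda>j\<in>{..<m}. \<Sum>i\<in>{..<n + m}. smul (\<beta> j i) (x i)) j)) j"
            using key[of j x] by simp
        qed
      qed simp_all
      also have "\<dots> = distr (distr P (PiM {..<m} (\<lambda>_. ?B)) Z) (PiM {..<m} (\<lambda>_. ?B)) Sc"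
        by (rule distr_distr[OF Scm Zm, symmetric])
      also have "\<dots> = distr (PiM {..<m} (\<lambda>_. \<mu>)) (PiM {..<m} (\<lambda>_. ?B)) Sc" unfolding core ..
      also have "\<dots> = PiM {..<m} \<nu>" unfolding Sc_def \<nu>_def by (rule G.prod_scale) (simp_all add: ne)
      finally show ?thesis .
    qed
    have pnu: "prob_space (\<nu> j)" for j
      unfolding \<nu>_def by (rule prob_space.prob_space_distr[OF G.prob_mu]) (simp add: G.meas_mu_iff K.measurable_smul_c)
    have marg: "distr M ?B (Y j) = \<nu> j" if j: "j < m" for j
    proof -
      have pjm: "(\<lambda>z. z j) \<in> PiM {..<m} (\<lambda>_. ?B) \<rightarrow>\<^sub>M ?B" using j by simp
      have Yvm: "(\<lambda>\<omega>. \<lambda>j\<in>{..<m}. Y j \<omega>) \<in> M \<rightarrow>\<^sub>M PiM {..<m} (\<lambda>_. ?B)"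
        by (rule measurable_restrict) (rule Ym)
      have "distr M ?B (Y j) = distr M ?B ((\<lambda>z. z j) \<circ> (\<lambda>\<omega>. \<lambda>j\<in>{..<m}. Y j \<omega>))"
        using j by (intro distr_cong) auto
      also have "\<dots> = distr (distr M (PiM {..<m} (\<lambda>_. ?B)) (\<lambda>\<omega>. \<lambda>j\<in>{..<m}. Y j \<omega>)) ?B (\<lambda>z. z j)"
        by (rule distr_distr[OF pjm Yvm, symmetric])
      also have "\<dots> = distr (PiM {..<m} \<nu>) ?B (\<lambda>z. z j)" unfolding joint ..
      also have "\<dots> = distr (PiM {..<m} \<nu>) (\<nu> j) (\<lambda>z. z j)"
        by (rule G.distr_target_cong) (simp add: \<nu>_def)
      also have "\<dots> = \<nu> j" by (rule distr_PiM_component) (use pnu j in auto)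
      finally show ?thesis .
    qed
    have indY: "M.indep_vars (\<lambda>_. ?B) Y {..<m}"
    proof (subst M.indep_vars_iff_distr_eq_PiM'[OF ne Ym])
      show "distr M (PiM {..<m} (\<lambda>_. ?B)) (\<lambda>\<omega>. \<lambda>j\<in>{..<m}. Y j \<omega>) = PiM {..<m} (\<lambda>j. distr M ?B (Y j))"
        unfolding joint by (intro PiM_cong refl) (simp add: marg)
    qed
    have gY: "K_gaussian absv smul nrm M (Y j)" if "j < m" for j
      unfolding K.K_gaussian_iff marg[OF that] \<nu>_def
      using Ym K.gauss_scale[OF G.prob_mu G.sets_mu G.gauss] by simp
    show ?thesis using indY gY unfolding Y_def by simp
  qed
qed



end
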